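(* Let $d$ be a positive integer and $\mathcal{G}$ a hereditary class of finite graphs such that $\max\{\alpha^{\ast}(G),\widetilde{\omega}(G)\}\le d$ for every $G\in\mathcal{G}$. Then the parameters $\alpha\text{-}\mathsf{tw}$, $\mathsf{rw}$ and $G\mapsto\mathsf{tw}(\widetilde{G})$ are pairwise equivalent on $\mathcal{G}$, i.e. for any two $p,q$ of them there is a function $g\colon\mathbb{N}\to\mathbb{N}$ with $q(G)\le g(p(G))$ for all $G\in\mathcal{G}$.
   Context: Hereditary means closed under induced subgraphs. Two vertices are equivalent if they lie in exactly the same maximal cliques; $\widetilde{G}$ is the clique-quotient graph (equivalence classes as vertices, two distinct classes adjacent iff representatives are adjacent). $\widetilde{\omega}(G)$ is the maximum over maximal cliques $K$ of the number of equivalence classes meeting $K$. $\alpha^{\ast}(G)=\max_v\alpha(G[N[v]])$. $\alpha\text{-}\mathsf{tw}(G)$ is the minimum over tree-decompositions of the maximum independence number of a bag; $\mathsf{tw}(H)$ is the minimum over tree-decompositions of $H$ of the maximum bag size. Rankwidth $\mathsf{rw}(G)$: the cutrank of $X\subseteq V(G)$ is the $\mathbb{F}_2$-rank of the adjacency submatrix with rows $X$ and columns $V(G)\setminus X$; a rank-decomposition is a tree with internal nodes of degree $3$ and a bijection from its leaves to $V(G)$; its width is the maximum over tree edges of the cutrank of the vertices mapped to one side; $\mathsf{rw}(G)$ is the minimum width. *)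

theory Defs
  imports Main
begin

type_synonym 'a graph = "'a set \<times> ('a \<times> 'a) set"

definition verts :: "'a graph \<Rightarrow> 'a set" where "verts G = fst G"
definition edges :: "'a graph \<Rightarrow> ('a \<times> 'a) set" where "edges G = snd G"
definition adj :: "'a graph \<Rightarrow> 'a \<Rightarrow> 'a \<Rightarrow> bool" where "adj G u v \<longleftrightarrow> (u, v) \<in> edges G"

definition finite_graph :: "'a graph \<Rightarrow> bool" where
  "finite_graph G \<longleftrightarrow> finite (verts G) \<and> edges G \<subseteq> verts G \<times> verts G
     \<and> sym (edges G) \<and> (\<forall>x. (x, x) \<notin> edges G)"

definition induced :: "'a graph \<Rightarrow> 'a set \<Rightarrow> 'a graph" where
  "induced G S = (S \<inter> verts G, edges G \<inter> (S \<times> S))"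

definition hereditary :: "'a graph set \<Rightarrow> bool" where
  "hereditary \<G> \<longleftrightarrow> (\<forall>G\<in>\<G>. \<forall>S. S \<subseteq> verts G \<longrightarrow> induced G S \<in> \<G>)"

definition connected_in :: "('a \<times> 'a) set \<Rightarrow> 'a set \<Rightarrow> bool" where
  "connected_in E S \<longleftrightarrow> (\<forall>x\<in>S. \<forall>y\<in>S. (x, y) \<in> (E \<inter> (S \<times> S))\<^sup>*)"

definition clique :: "'a graph \<Rightarrow> 'a set \<Rightarrow> bool" where
  "clique G K \<longleftrightarrow> K \<subseteq> verts G \<and> (\<forall>u\<in>K. \<forall>v\<in>K. u \<noteq> v \<longrightarrow> adj G u v)"

definition maximal_clique :: "'a graph \<Rightarrow> 'a set \<Rightarrow> bool" where
  "maximal_clique G K \<longleftrightarrow> clique G K \<and> (\<forall>K'. clique G K' \<and> K \<subseteq> K' \<longrightarrow> K' = K)"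

definition independent :: "'a graph \<Rightarrow> 'a set \<Rightarrow> bool" where
  "independent G I \<longleftrightarrow> I \<subseteq> verts G \<and> (\<forall>u\<in>I. \<forall>v\<in>I. \<not> adj G u v)"

definition alpha :: "'a graph \<Rightarrow> nat" where
  "alpha G = Max {card I | I. independent G I}"

definition closed_nbhd :: "'a graph \<Rightarrow> 'a \<Rightarrow> 'a set" where
  "closed_nbhd G v = insert v {u \<in> verts G. adj G v u}"

definition alpha_star :: "'a graph \<Rightarrow> nat" where
  "alpha_star G = Max (insert 0 {alpha (induced G (closed_nbhd G v)) | v. v \<in> verts G})"

definition clique_equiv :: "'a graph \<Rightarrow> 'a \<Rightarrow> 'a \<Rightarrow> bool" where
  "clique_equiv G u v \<longleftrightarrow> u \<in> verts G \<and> v \<in> verts G \<and>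
     (\<forall>K. maximal_clique G K \<longrightarrow> (u \<in> K \<longleftrightarrow> v \<in> K))"

definition eq_class :: "'a graph \<Rightarrow> 'a \<Rightarrow> 'a set" where
  "eq_class G v = {u. clique_equiv G v u}"

definition eq_classes :: "'a graph \<Rightarrow> 'a set set" where
  "eq_classes G = eq_class G ` verts G"

text \<open>Adjacency of classes: by equivalence of the vertices, adjacency of
  representatives does not depend on the choice of representatives.\<close>
definition clique_quotient :: "'a graph \<Rightarrow> 'a set graph" where
  "clique_quotient G = (eq_classes G,
     {(C, D). C \<in> eq_classes G \<and> D \<in> eq_classes G \<and> C \<noteq> D \<and>
              (\<exists>u\<in>C. \<exists>v\<in>D. adj G u v)})"

definition omega_tilde :: "'a graph \<Rightarrow> nat" where
  "omega_tilde G = Max (insert 0 {card {C \<in> eq_classes G. C \<inter> K \<noteq> {}} | K. maximal_clique G K})"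

text \<open>A tree on nodes N (of type nat) with symmetric irreflexive edge set E:
  nonempty, finite, connected, and every edge is a bridge (acyclic).\<close>
definition is_tree :: "nat set \<Rightarrow> (nat \<times> nat) set \<Rightarrow> bool" where
  "is_tree N E \<longleftrightarrow> finite N \<and> N \<noteq> {} \<and> E \<subseteq> N \<times> N \<and> sym E \<and> (\<forall>x. (x, x) \<notin> E)
     \<and> connected_in E N
     \<and> (\<forall>(x, y)\<in>E. (x, y) \<notin> (E - {(x, y), (y, x)})\<^sup>*)"

definition tree_decomposition ::
  "'a graph \<Rightarrow> nat set \<Rightarrow> (nat \<times> nat) set \<Rightarrow> (nat \<Rightarrow> 'a set) \<Rightarrow> bool" where
  "tree_decomposition G N E bag \<longleftrightarrow> is_tree N E
     \<and> (\<forall>t\<in>N. bag t \<subseteq> verts G)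
     \<and> (\<forall>v\<in>verts G. \<exists>t\<in>N. v \<in> bag t)
     \<and> (\<forall>u v. adj G u v \<longrightarrow> (\<exists>t\<in>N. u \<in> bag t \<and> v \<in> bag t))
     \<and> (\<forall>v\<in>verts G. connected_in E {t \<in> N. v \<in> bag t})"

definition treewidth :: "'a graph \<Rightarrow> nat" where
  "treewidth G = Inf {w. \<exists>N E bag. tree_decomposition G N E bag \<and>
                                   (\<forall>t\<in>N. card (bag t) \<le> w)}"

definition alpha_treewidth :: "'a graph \<Rightarrow> nat" where
  "alpha_treewidth G = Inf {w. \<exists>N E bag. tree_decomposition G N E bag \<and>
                                   (\<forall>t\<in>N. alpha (induced G (bag t)) \<le> w)}"

text \<open>Linear independence over GF(2) of the rows indexed by R of the adjacency
  matrix restricted to columns Y: no nonempty subset of rows sums to zero mod 2.\<close>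
definition gf2_rows_independent :: "'a graph \<Rightarrow> 'a set \<Rightarrow> 'a set \<Rightarrow> bool" where
  "gf2_rows_independent G R Y \<longleftrightarrow>
     (\<forall>S. S \<subseteq> R \<and> S \<noteq> {} \<longrightarrow> (\<exists>y\<in>Y. odd (card {x\<in>S. adj G x y})))"

text \<open>cutrank of X: GF(2)-rank of the adjacency submatrix with rows X and columns
  V(G) - X, i.e. the maximum number of linearly independent rows.\<close>
definition cutrank :: "'a graph \<Rightarrow> 'a set \<Rightarrow> nat" where
  "cutrank G X = Max {card R | R. R \<subseteq> X \<inter> verts G \<and>
                     gf2_rows_independent G R (verts G - X)}"

definition tree_degree :: "(nat \<times> nat) set \<Rightarrow> nat \<Rightarrow> nat" where
  "tree_degree E t = card {u. (t, u) \<in> E}"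

definition tree_leaves :: "nat set \<Rightarrow> (nat \<times> nat) set \<Rightarrow> nat set" where
  "tree_leaves N E = {t \<in> N. tree_degree E t \<le> 1}"

definition tree_side :: "nat set \<Rightarrow> (nat \<times> nat) set \<Rightarrow> nat \<Rightarrow> nat \<Rightarrow> nat set" where
  "tree_side N E s t = {u \<in> N. (s, u) \<in> (E - {(s, t), (t, s)})\<^sup>*}"

definition rank_decomposition ::
  "'a graph \<Rightarrow> nat set \<Rightarrow> (nat \<times> nat) set \<Rightarrow> (nat \<Rightarrow> 'a) \<Rightarrow> bool" where
  "rank_decomposition G N E f \<longleftrightarrow> is_tree N E
     \<and> (\<forall>t \<in> N - tree_leaves N E. tree_degree E t = 3)
     \<and> bij_betw f (tree_leaves N E) (verts G)"

definition rankwidth :: "'a graph \<Rightarrow> nat" where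
  "rankwidth G = Inf {w. \<exists>N E f. rank_decomposition G N E f \<and>
      (\<forall>(s, t)\<in>E. cutrank G (f ` (tree_leaves N E \<inter> tree_side N E s t)) \<le> w)}"

end

theory Submission
  imports Defs
begin


lemma fg_adjD: "finite_graph G \<Longrightarrow> adj G u v \<Longrightarrow> u \<in> verts G \<and> v \<in> verts G"
  unfolding finite_graph_def adj_def by auto

lemma fg_adj_sym: "finite_graph G \<Longrightarrow> adj G u v \<Longrightarrow> adj G v u"
  unfolding finite_graph_def adj_def by (auto dest: symD)

lemma fg_adj_irrefl: "finite_graph G \<Longrightarrow> \<not> adj G u u"
  unfolding finite_graph_def adj_def by auto

lemma fg_finite: "finite_graph G \<Longrightarrow> finite (verts G)"
  unfolding finite_graph_def by auto

lemma clique_extend: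
  assumes G: "finite_graph G" and K: "clique G K"
  shows "\<exists>K'. maximal_clique G K' \<and> K \<subseteq> K'"
proof -
  let ?C = "{K'. clique G K' \<and> K \<subseteq> K'}"
  have "?C \<subseteq> Pow (verts G)" unfolding clique_def by auto
  hence fin: "finite ?C" using fg_finite[OF G] by (meson finite_Pow_iff finite_subset)
  have ne: "?C \<noteq> {}" using K by auto
  obtain m where m: "m \<in> ?C" "\<forall>b\<in>?C. m \<subseteq> b \<longrightarrow> m = b"
    using finite_has_maximal[OF fin ne] by blast
  have "maximal_clique G m" unfolding maximal_clique_def using m by auto
  thus ?thesis using m by auto
qed

lemma twin_adj:
  assumes G: "finite_graph G" and e: "clique_equiv G u v" and ne: "u \<noteq> v"
  shows "adj G u v"
proof -
  have "clique G {u}" using e unfolding clique_def clique_equiv_def by auto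
  then obtain K where K: "maximal_clique G K" "{u} \<subseteq> K" using clique_extend[OF G] by blast
  hence "v \<in> K" using e unfolding clique_equiv_def by auto
  thus ?thesis using K ne unfolding maximal_clique_def clique_def by auto
qed

lemma twin_nbr:
  assumes G: "finite_graph G" and e: "clique_equiv G u v" and y: "y \<noteq> v" and a: "adj G u y"
  shows "adj G v y"
proof -
  have uy: "u \<noteq> y" using a fg_adj_irrefl[OF G] by auto
  have "clique G {u, y}" using e a fg_adjD[OF G a] fg_adj_sym[OF G a]
    unfolding clique_def clique_equiv_def by auto
  then obtain K where K: "maximal_clique G K" "{u, y} \<subseteq> K" using clique_extend[OF G] by blast
  hence "v \<in> K" using e unfolding clique_equiv_def by auto
  thus ?thesis using K y unfolding maximal_clique_def clique_def by auto
qed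

lemma twin_adj_iff:
  assumes G: "finite_graph G" and e: "clique_equiv G u v" and y: "y \<noteq> u" "y \<noteq> v"
  shows "adj G u y \<longleftrightarrow> adj G v y"
proof -
  have e': "clique_equiv G v u" using e unfolding clique_equiv_def by auto
  show ?thesis using twin_nbr[OF G e y(2)] twin_nbr[OF G e' y(1)] by auto
qed

lemma ce_sym: "clique_equiv G u v \<Longrightarrow> clique_equiv G v u"
  unfolding clique_equiv_def by auto
lemma ce_trans: "clique_equiv G u v \<Longrightarrow> clique_equiv G v w \<Longrightarrow> clique_equiv G u w"
  unfolding clique_equiv_def by auto
lemma ce_refl: "v \<in> verts G \<Longrightarrow> clique_equiv G v v"
  unfolding clique_equiv_def by auto

lemma eq_class_self: "v \<in> verts G \<Longrightarrow> v \<in> eq_class G v"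
  unfolding eq_class_def by (auto intro: ce_refl)

lemma eq_class_eq: "u \<in> eq_class G v \<Longrightarrow> eq_class G u = eq_class G v"
  unfolding eq_class_def by (auto intro: ce_sym ce_trans)

lemma eq_class_sub: "eq_class G v \<subseteq> verts G"
  unfolding eq_class_def clique_equiv_def by auto

lemma eq_classes_sub: "C \<in> eq_classes G \<Longrightarrow> C \<subseteq> verts G"
  unfolding eq_classes_def using eq_class_sub[of G] by auto

lemma eq_classes_finite: "finite_graph G \<Longrightarrow> finite (eq_classes G)"
  unfolding eq_classes_def using fg_finite[of G] by auto

lemma eq_classes_mem: "C \<in> eq_classes G \<Longrightarrow> u \<in> C \<Longrightarrow> C = eq_class G u"
  unfolding eq_classes_def using eq_class_eq[of u G] by auto

lemma eq_classes_equiv: "C \<in> eq_classes G \<Longrightarrow> u \<in> C \<Longrightarrow> v \<in> C \<Longrightarrow> clique_equiv G u v"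
  unfolding eq_classes_def eq_class_def by (auto intro: ce_sym ce_trans)

lemma eq_classes_disj: "C \<in> eq_classes G \<Longrightarrow> D \<in> eq_classes G \<Longrightarrow> u \<in> C \<Longrightarrow> u \<in> D \<Longrightarrow> C = D"
proof -
  assume a: "C \<in> eq_classes G" "D \<in> eq_classes G" "u \<in> C" "u \<in> D"
  have "C = eq_class G u" using eq_classes_mem[OF a(1,3)] .
  moreover have "D = eq_class G u" using eq_classes_mem[OF a(2,4)] .
  ultimately show ?thesis by simp
qed

lemma eq_class_in: "v \<in> verts G \<Longrightarrow> eq_class G v \<in> eq_classes G"
  unfolding eq_classes_def by auto

definition cls :: "'a graph \<Rightarrow> 'a set \<Rightarrow> 'a set set" where
  "cls G Y = {C \<in> eq_classes G. C \<inter> Y \<noteq> {}}"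

lemma cls_finite: "finite_graph G \<Longrightarrow> finite (cls G Y)"
  unfolding cls_def using eq_classes_finite[of G] by auto

lemma cls_mono: "Y \<subseteq> Z \<Longrightarrow> cls G Y \<subseteq> cls G Z"
  unfolding cls_def by auto

lemma cls_Un: "cls G (Y \<union> Z) = cls G Y \<union> cls G Z"
  unfolding cls_def by auto

lemma cls_cover: "y \<in> Y \<Longrightarrow> y \<in> verts G \<Longrightarrow> y \<in> \<Union>(cls G Y)"
proof -
  assume a: "y \<in> Y" "y \<in> verts G"
  have "eq_class G y \<in> cls G Y" unfolding cls_def using eq_class_self[OF a(2)] eq_class_in[OF a(2)] a(1) by auto
  thus ?thesis using eq_class_self[OF a(2)] by auto
qed

lemma card_cls_le: "finite Y \<Longrightarrow> card (cls G Y) \<le> card Y"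
proof -
  assume f: "finite Y"
  have "cls G Y \<subseteq> (\<lambda>y. eq_class G y) ` (Y \<inter> verts G)"
  proof
    fix C assume "C \<in> cls G Y"
    then obtain y where "y \<in> C" "y \<in> Y" "C \<in> eq_classes G" unfolding cls_def by auto
    hence "C = eq_class G y" "y \<in> verts G" using eq_classes_mem[of C G y] eq_classes_sub[of C G] by auto
    thus "C \<in> (\<lambda>y. eq_class G y) ` (Y \<inter> verts G)" using \<open>y \<in> Y\<close> by auto
  qed
  hence "card (cls G Y) \<le> card ((\<lambda>y. eq_class G y) ` (Y \<inter> verts G))" using f by (simp add: card_mono)
  also have "\<dots> \<le> card (Y \<inter> verts G)" using f card_image_le by blast
  also have "\<dots> \<le> card Y" using f by (simp add: card_mono)
  finally show ?thesis .
qed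

section \<open>Ramsey\<close>

lemma ramsey_simple:
  assumes symP: "\<And>x y. P x y \<Longrightarrow> P y x"
  shows "finite A \<Longrightarrow> (2::nat) ^ (s + t) \<le> card A \<Longrightarrow>
    (\<exists>K\<subseteq>A. card K = s \<and> (\<forall>u\<in>K. \<forall>v\<in>K. u \<noteq> v \<longrightarrow> P u v)) \<or>
    (\<exists>I\<subseteq>A. card I = t \<and> (\<forall>u\<in>I. \<forall>v\<in>I. u \<noteq> v \<longrightarrow> \<not> P u v))"
proof (induction "s + t" arbitrary: s t A)
  case 0
  thus ?case by (intro disjI1 exI[of _ "{}"]) auto
next
  case (Suc n)
  show ?case
  proof (cases "s = 0 \<or> t = 0")
    case True
    show ?thesis
    proof (cases "s = 0")
      case True thus ?thesis by (intro disjI1 exI[of _ "{}"]) auto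
    next
      case False thus ?thesis using \<open>s = 0 \<or> t = 0\<close> by (intro disjI2 exI[of _ "{}"]) auto
    qed
  next
    case False
    hence s: "s \<ge> 1" and t: "t \<ge> 1" by auto
    have "(1::nat) \<le> 2 ^ (s + t)" by simp
    hence "card A \<ge> 1" using Suc.prems(2) by linarith
    then obtain a where a: "a \<in> A" using Suc.prems by fastforce
    define A1 where "A1 = {x \<in> A - {a}. P a x}"
    define A2 where "A2 = {x \<in> A - {a}. \<not> P a x}"
    have un: "A - {a} = A1 \<union> A2" "A1 \<inter> A2 = {}" unfolding A1_def A2_def by auto
    have f1: "finite A1" "finite A2" using Suc.prems unfolding A1_def A2_def by auto
    have cA: "card (A - {a}) = card A - 1" using a Suc.prems by auto
    have "card A1 + card A2 = card A - 1" using card_Un_disjoint[OF f1 un(2)] un(1) cA by simp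
    moreover have "(2::nat) ^ (s + t) = 2 * 2 ^ n" by (simp add: Suc.hyps(2)[symmetric])
    ultimately have c2: "card A1 + card A2 + 1 = card A" "2 * 2 ^ n \<le> card A" using Suc.prems(2) \<open>card A \<ge> 1\<close> by auto
    have "(2::nat) ^ n \<le> card A1 \<or> 2 ^ n \<le> card A2"
    proof (rule ccontr)
      assume "\<not> ?thesis"
      hence "card A1 + card A2 + 1 < 2 * 2 ^ n" by simp
      thus False using c2 by simp
    qed
    thus ?thesis
    proof
      assume c: "(2::nat) ^ n \<le> card A1"
      have "n = (s - 1) + t" using Suc.hyps(2) s by simp
      from Suc.hyps(1)[OF this f1(1)] c
      consider (K) K where "K \<subseteq> A1" "card K = s - 1" "\<forall>u\<in>K. \<forall>v\<in>K. u \<noteq> v \<longrightarrow> P u v"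
        | (I) I where "I \<subseteq> A1" "card I = t" "\<forall>u\<in>I. \<forall>v\<in>I. u \<noteq> v \<longrightarrow> \<not> P u v"
        using \<open>n = (s - 1) + t\<close> by auto
      thus ?thesis
      proof cases
        case K
        have "a \<notin> K" using K(1) unfolding A1_def by auto
        moreover have "finite K" using K(1) f1 finite_subset by auto
        ultimately have "card (insert a K) = s" using K(2) s by simp
        moreover have "insert a K \<subseteq> A" using K(1) a unfolding A1_def by auto
        moreover have "\<forall>u\<in>insert a K. \<forall>v\<in>insert a K. u \<noteq> v \<longrightarrow> P u v"
        proof (intro ballI impI)
          fix u v assume uv: "u \<in> insert a K" "v \<in> insert a K" "u \<noteq> v"
          show "P u v"
          proof (cases "u = a")
            case True thus ?thesis using uv K(1) unfolding A1_def by auto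
          next
            case False
            show ?thesis
            proof (cases "v = a")
              case True
              hence "P v u" using uv False K(1) unfolding A1_def by auto
              thus ?thesis by (rule symP)
            next
              case False
              thus ?thesis using uv \<open>u \<noteq> a\<close> K(3) by auto
            qed
          qed
        qed
        ultimately show ?thesis by blast
      next
        case I
        thus ?thesis unfolding A1_def by blast
      qed
    next
      assume c: "(2::nat) ^ n \<le> card A2"
      have "n = s + (t - 1)" using Suc.hyps(2) t by simp
      from Suc.hyps(1)[OF this f1(2)] c
      consider (K) K where "K \<subseteq> A2" "card K = s" "\<forall>u\<in>K. \<forall>v\<in>K. u \<noteq> v \<longrightarrow> P u v"
        | (I) I where "I \<subseteq> A2" "card I = t - 1" "\<forall>u\<in>I. \<forall>v\<in>I. u \<noteq> v \<longrightarrow> \<not> P u v"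
        using \<open>n = s + (t - 1)\<close> by auto
      thus ?thesis
      proof cases
        case K
        thus ?thesis unfolding A2_def by blast
      next
        case I
        have "a \<notin> I" using I(1) unfolding A2_def by auto
        moreover have "finite I" using I(1) f1 finite_subset by auto
        ultimately have "card (insert a I) = t" using I(2) t by simp
        moreover have "insert a I \<subseteq> A" using I(1) a unfolding A2_def by auto
        moreover have "\<forall>u\<in>insert a I. \<forall>v\<in>insert a I. u \<noteq> v \<longrightarrow> \<not> P u v"
        proof (intro ballI impI)
          fix u v assume uv: "u \<in> insert a I" "v \<in> insert a I" "u \<noteq> v"
          show "\<not> P u v"
          proof (cases "u = a")
            case True thus ?thesis using uv I(1) unfolding A2_def by auto
          next
            case False
            show ?thesis
            proof (cases "v = a")
              case True
              hence "\<not> P v u" using uv False I(1) unfolding A2_def by auto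
              thus ?thesis using symP by blast
            next
              case False
              thus ?thesis using uv \<open>u \<noteq> a\<close> I(3) by auto
            qed
          qed
        qed
        ultimately show ?thesis by blast
      qed
    qed
  qed
qed


lemma cutrank_le:
  assumes fin: "finite (verts G)"
    and b: "\<And>R. R \<subseteq> Z \<inter> verts G \<Longrightarrow> gf2_rows_independent G R (verts G - Z) \<Longrightarrow> card R \<le> b"
  shows "cutrank G Z \<le> b"
proof -
  let ?S = "{card R | R. R \<subseteq> Z \<inter> verts G \<and> gf2_rows_independent G R (verts G - Z)}"
  have "?S \<subseteq> card ` Pow (Z \<inter> verts G)" by auto
  hence f: "finite ?S" using fin by (meson finite_Int finite_Pow_iff finite_imageI finite_subset)
  have "0 \<in> ?S" unfolding gf2_rows_independent_def by (intro CollectI exI[of _ "{}"]) auto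
  hence ne: "?S \<noteq> {}" by auto
  show ?thesis unfolding cutrank_def using Max_le_iff[OF f ne] b by auto
qed

lemma cutrank_ge:
  assumes fin: "finite (verts G)"
    and R: "R \<subseteq> Z \<inter> verts G" "gf2_rows_independent G R (verts G - Z)"
  shows "card R \<le> cutrank G Z"
proof -
  let ?S = "{card R | R. R \<subseteq> Z \<inter> verts G \<and> gf2_rows_independent G R (verts G - Z)}"
  have "?S \<subseteq> card ` Pow (Z \<inter> verts G)" by auto
  hence f: "finite ?S" using fin by (meson finite_Int finite_Pow_iff finite_imageI finite_subset)
  show ?thesis unfolding cutrank_def using Max_ge[OF f] R by auto
qed

lemma card_single_adj: "card {x \<in> {r}. P x} = (if P r then 1 else 0)"
proof -
  have "{x \<in> {r}. P x} = (if P r then {r} else {})" by auto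
  thus ?thesis by simp
qed

lemma row_bound:
  assumes G: "finite_graph G" and fin: "finite \<C>"
    and cover: "\<forall>x\<in>Z \<inter> verts G. (\<exists>y\<in>verts G - Z. adj G x y) \<longrightarrow> (\<exists>C\<in>\<C>. x \<in> C)"
    and eqrow: "\<forall>C\<in>\<C>. \<forall>u\<in>C \<inter> Z. \<forall>v\<in>C \<inter> Z. \<forall>y\<in>verts G - Z. adj G u y \<longleftrightarrow> adj G v y"
  shows "cutrank G Z \<le> card \<C>"
proof (rule cutrank_le[OF fg_finite[OF G]])
  fix R assume R: "R \<subseteq> Z \<inter> verts G" "gf2_rows_independent G R (verts G - Z)"
  have ex: "\<exists>C. C \<in> \<C> \<and> r \<in> C" if r: "r \<in> R" for r
  proof -
    have "{r} \<subseteq> R" "{r} \<noteq> {}" using r by auto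
    then obtain y where y: "y \<in> verts G - Z" "odd (card {x \<in> {r}. adj G x y})"
      using R(2) unfolding gf2_rows_independent_def by blast
    have "adj G r y"
    proof (rule ccontr)
      assume "\<not> adj G r y"
      hence "{x \<in> {r}. adj G x y} = {}" by auto
      thus False using y(2) by (metis card.empty even_zero)
    qed
    moreover have "r \<in> Z \<inter> verts G" using R(1) r by auto
    ultimately have "\<exists>C\<in>\<C>. r \<in> C" using cover y(1) by blast
    thus ?thesis by blast
  qed
  define h where "h r = (SOME C. C \<in> \<C> \<and> r \<in> C)" for r
  have h: "h r \<in> \<C> \<and> r \<in> h r" if "r \<in> R" for r
    unfolding h_def by (rule someI_ex[OF ex[OF that]])
  have "inj_on h R"
  proof (rule inj_onI, rule ccontr)
    fix r r' assume a: "r \<in> R" "r' \<in> R" "h r = h r'" "r \<noteq> r'"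
    have "{r, r'} \<subseteq> R" "{r, r'} \<noteq> {}" using a by auto
    then obtain y where y: "y \<in> verts G - Z" "odd (card {x \<in> {r, r'}. adj G x y})"
      using R(2) unfolding gf2_rows_independent_def by blast
    have rr: "r \<in> h r \<inter> Z" "r' \<in> h r \<inter> Z" using h[OF a(1)] h[OF a(2)] a(3) a(1,2) R(1) by auto
    have hC: "h r \<in> \<C>" using h[OF a(1)] by simp
    have "adj G r y \<longleftrightarrow> adj G r' y" using eqrow hC rr y(1) by blast
    hence "{x \<in> {r, r'}. adj G x y} = {} \<or> {x \<in> {r, r'}. adj G x y} = {r, r'}" by auto
    moreover have "card {r, r'} = 2" using a(4) by simp
    ultimately show False using y(2) by (metis card.empty even_zero even_numeral)
  qed
  moreover have "h ` R \<subseteq> \<C>" using h by auto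
  ultimately show "card R \<le> card \<C>" using card_inj_on_le[OF _ _ fin] by blast
qed

lemma card_parity_split:
  assumes "finite S1" "finite S2"
  shows "card (((S1 - S2) \<union> (S2 - S1)) \<inter> P) + 2 * card (S1 \<inter> S2 \<inter> P) = card (S1 \<inter> P) + card (S2 \<inter> P)"
proof -
  have a: "card (S1 \<inter> P) = card ((S1 - S2) \<inter> P) + card (S1 \<inter> S2 \<inter> P)"
    using assms by (subst card_Un_disjoint[symmetric]) (auto intro: arg_cong[where f=card])
  have b: "card (S2 \<inter> P) = card ((S2 - S1) \<inter> P) + card (S1 \<inter> S2 \<inter> P)"
    using assms by (subst card_Un_disjoint[symmetric]) (auto intro: arg_cong[where f=card])
  have c: "card (((S1 - S2) \<union> (S2 - S1)) \<inter> P) = card ((S1 - S2) \<inter> P) + card ((S2 - S1) \<inter> P)"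
    using assms by (subst card_Un_disjoint[symmetric]) (auto intro: arg_cong[where f=card])
  show ?thesis using a b c by simp
qed

lemma col_bound:
  assumes G: "finite_graph G" and fin: "finite \<C>"
    and cover: "\<forall>y\<in>verts G - Z. (\<exists>x\<in>Z \<inter> verts G. adj G x y) \<longrightarrow> (\<exists>C\<in>\<C>. y \<in> C)"
    and eqcol: "\<forall>C\<in>\<C>. \<forall>u\<in>C - Z. \<forall>v\<in>C - Z. \<forall>x\<in>Z \<inter> verts G. adj G x u \<longleftrightarrow> adj G x v"
  shows "cutrank G Z \<le> card \<C>"
proof (rule cutrank_le[OF fg_finite[OF G]])
  fix R assume R: "R \<subseteq> Z \<inter> verts G" "gf2_rows_independent G R (verts G - Z)"
  have finR: "finite R" using R(1) fg_finite[OF G] finite_subset by auto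
  define \<C>' where "\<C>' = {C \<in> \<C>. C \<inter> (verts G - Z) \<noteq> {}}"
  define rep where "rep C = (SOME y. y \<in> C \<inter> (verts G - Z))" for C
  have rep: "rep C \<in> C \<inter> (verts G - Z)" if "C \<in> \<C>'" for C
  proof -
    have "\<exists>y. y \<in> C \<inter> (verts G - Z)" using that unfolding \<C>'_def by blast
    thus ?thesis unfolding rep_def by (rule someI_ex)
  qed
  define Y where "Y = rep ` \<C>'"
  have sub: "\<C>' \<subseteq> \<C>" unfolding \<C>'_def by auto
  have finY: "finite Y" unfolding Y_def using finite_subset[OF sub fin] by simp
  have "card Y \<le> card \<C>'" unfolding Y_def by (rule card_image_le) (rule finite_subset[OF sub fin])
  also have "\<dots> \<le> card \<C>" by (rule card_mono[OF fin sub])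
  finally have cY: "card Y \<le> card \<C>" .
  define \<phi> where "\<phi> S = {y \<in> Y. odd (card {x \<in> S. adj G x y})}" for S
  have "inj_on \<phi> (Pow R)"
  proof (rule inj_onI, rule ccontr)
    fix S1 S2 assume a: "S1 \<in> Pow R" "S2 \<in> Pow R" "\<phi> S1 = \<phi> S2" "S1 \<noteq> S2"
    define S where "S = (S1 - S2) \<union> (S2 - S1)"
    have SR: "S \<subseteq> R" "S \<noteq> {}" using a unfolding S_def by auto
    obtain y where y: "y \<in> verts G - Z" "odd (card {x \<in> S. adj G x y})"
      using R(2) SR unfolding gf2_rows_independent_def by blast
    have "{x \<in> S. adj G x y} \<noteq> {}" using y(2) by (metis card.empty even_zero)
    then obtain x where x: "x \<in> S" "adj G x y" by auto
    have xZ: "x \<in> Z \<inter> verts G" using SR(1) R(1) x(1) by auto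
    have "\<exists>C\<in>\<C>. y \<in> C" using cover y(1) xZ x(2) by blast
    then obtain C where C: "C \<in> \<C>" "y \<in> C" by blast
    hence C': "C \<in> \<C>'" unfolding \<C>'_def using y(1) by auto
    define y' where "y' = rep C"
    have yY: "y' \<in> Y" unfolding Y_def y'_def using C' by auto
    have ry: "y' \<in> C - Z" using rep[OF C'] unfolding y'_def by auto
    have yC: "y \<in> C - Z" using C(2) y(1) by auto
    have same: "adj G x' y \<longleftrightarrow> adj G x' y'" if "x' \<in> Z \<inter> verts G" for x'
    proof -
      have "\<forall>u\<in>C - Z. \<forall>v\<in>C - Z. \<forall>x\<in>Z \<inter> verts G. adj G x u \<longleftrightarrow> adj G x v" using eqcol C(1) by blast
      thus ?thesis using yC ry that by blast
    qed
    have "{x \<in> S. adj G x y} = {x \<in> S. adj G x y'}"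
    proof -
      have "\<forall>x\<in>S. x \<in> Z \<inter> verts G" using SR(1) R(1) by auto
      thus ?thesis using same by auto
    qed
    hence o: "odd (card (S \<inter> {x. adj G x y'}))" using y(2) by (simp add: Collect_conj_eq Int_commute)
    have "y' \<in> \<phi> S1 \<longleftrightarrow> y' \<in> \<phi> S2" using a(3) by simp
    hence e: "odd (card (S1 \<inter> {x. adj G x y'})) \<longleftrightarrow> odd (card (S2 \<inter> {x. adj G x y'}))"
      using yY unfolding \<phi>_def by (simp add: Collect_conj_eq Int_commute)
    have f12: "finite S1" "finite S2" using a(1,2) finR by (auto intro: finite_subset)
    have eq: "card (S \<inter> {x. adj G x y'}) + 2 * card (S1 \<inter> S2 \<inter> {x. adj G x y'})
       = card (S1 \<inter> {x. adj G x y'}) + card (S2 \<inter> {x. adj G x y'})"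
      unfolding S_def by (rule card_parity_split[OF f12])
    show False
    proof (cases "odd (card (S1 \<inter> {x. adj G x y'}))")
      case True
      hence "odd (card (S2 \<inter> {x. adj G x y'}))" using e by simp
      hence "even (card (S1 \<inter> {x. adj G x y'}) + card (S2 \<inter> {x. adj G x y'}))" using True by simp
      hence "even (card (S \<inter> {x. adj G x y'}))" unfolding eq[symmetric] by simp
      thus False using o by simp
    next
      case False
      hence "even (card (S2 \<inter> {x. adj G x y'}))" using e by simp
      hence "even (card (S1 \<inter> {x. adj G x y'}) + card (S2 \<inter> {x. adj G x y'}))" using False by simp
      hence "even (card (S \<inter> {x. adj G x y'}))" unfolding eq[symmetric] by simp
      thus False using o by simp
    qed
  qed
  moreover have "\<phi> ` Pow R \<subseteq> Pow Y" unfolding \<phi>_def by auto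
  moreover have "finite (Pow Y)" using finY by simp
  ultimately have "card (Pow R) \<le> card (Pow Y)" by (rule card_inj_on_le)
  hence "(2::nat) ^ card R \<le> 2 ^ card Y" using finR finY by (simp add: card_Pow)
  hence "card R \<le> card Y" by simp
  thus "card R \<le> card \<C>" using cY by simp
qed


abbreviation ed :: "nat \<Rightarrow> nat \<Rightarrow> (nat \<times> nat) set" where
  "ed x y \<equiv> {(x, y), (y, x)}"

lemma sym_rtrancl_sym: "sym R \<Longrightarrow> (x, y) \<in> R\<^sup>* \<Longrightarrow> (y, x) \<in> R\<^sup>*"
proof -
  assume s: "sym R" and p: "(x, y) \<in> R\<^sup>*"
  have "(y, x) \<in> (R\<inverse>)\<^sup>*" using rtrancl_converseI[of x y R] p by simp
  thus ?thesis using sym_conv_converse_eq[of R] s by simp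
qed

lemma sym_minus_ed: "sym R \<Longrightarrow> sym (R - ed x y)"
  unfolding sym_def by auto

lemma rtrancl_in_N:
  assumes "R \<subseteq> N \<times> N" "(a, b) \<in> R\<^sup>*" "a \<in> N" shows "b \<in> N"
  using assms(2) by (induction rule: rtrancl_induct) (use assms in auto)

lemma first_step:
  assumes "(x, z) \<in> R\<^sup>*" "x \<noteq> z"
  shows "\<exists>x'. (x, x') \<in> R \<and> (x', z) \<in> (R - {(x, x'), (x', x)})\<^sup>*"
  using assms
proof (induction rule: rtrancl_induct)
  case base thus ?case by simp
next
  case (step z z')
  show ?case
  proof (cases "x = z")
    case True
    thus ?thesis using step by auto
  next
    case False
    then obtain x' where x': "(x, x') \<in> R" "(x', z) \<in> (R - {(x, x'), (x', x)})\<^sup>*" using step by auto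
    have "(z, z') \<in> R - {(x, x'), (x', x)}" using step(2,4) False by auto
    thus ?thesis using x' by (meson rtrancl.rtrancl_into_rtrancl)
  qed
qed

lemma path_within:
  assumes "(a, z) \<in> R\<^sup>*" "\<And>w. (a, w) \<in> R\<^sup>* \<Longrightarrow> w \<in> Q"
  shows "(a, z) \<in> (R \<inter> Q \<times> Q)\<^sup>*"
  using assms
proof (induction rule: rtrancl_induct)
  case base thus ?case by simp
next
  case (step y z)
  have "y \<in> Q" "z \<in> Q" using step by (auto intro: rtrancl_into_rtrancl)
  thus ?case using step by (meson IntI mem_Sigma_iff rtrancl.rtrancl_into_rtrancl)
qed

context
  fixes N :: "nat set" and E :: "(nat \<times> nat) set"
  assumes tr: "is_tree N E"
begin

lemma tr_fin: "finite N" and tr_ne: "N \<noteq> {}" and tr_sub: "E \<subseteq> N \<times> N" and tr_sym: "sym E"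
  and tr_irr: "(x, x) \<notin> E"
  using tr unfolding is_tree_def by auto

lemma tr_edgeN: "(x, y) \<in> E \<Longrightarrow> x \<in> N \<and> y \<in> N"
  using tr_sub by auto

lemma tr_edge_sym: "(x, y) \<in> E \<Longrightarrow> (y, x) \<in> E"
  using tr_sym unfolding sym_def by auto

lemma tr_conn: "x \<in> N \<Longrightarrow> y \<in> N \<Longrightarrow> (x, y) \<in> E\<^sup>*"
proof -
  assume "x \<in> N" "y \<in> N"
  hence "(x, y) \<in> (E \<inter> N \<times> N)\<^sup>*" using tr unfolding is_tree_def connected_in_def by auto
  thus ?thesis using rtrancl_mono[of "E \<inter> N \<times> N" E] by auto
qed

lemma tr_bridge: "(x, y) \<in> E \<Longrightarrow> (x, y) \<notin> (E - ed x y)\<^sup>*"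
  using tr unfolding is_tree_def by auto

lemma side_iff: "x \<in> N \<Longrightarrow> z \<in> tree_side N E x y \<longleftrightarrow> (x, z) \<in> (E - ed x y)\<^sup>*"
  unfolding tree_side_def using rtrancl_in_N[of "E - ed x y" N x z] tr_sub by auto

lemma side_sub: "tree_side N E x y \<subseteq> N"
  unfolding tree_side_def by auto

lemma side_self: "x \<in> N \<Longrightarrow> x \<in> tree_side N E x y"
  unfolding tree_side_def by auto

lemma side_cover:
  assumes e: "(x, y) \<in> E" and z: "z \<in> N"
  shows "z \<in> tree_side N E x y \<or> z \<in> tree_side N E y x"
proof -
  have xN: "x \<in> N" and yN: "y \<in> N" using tr_edgeN[OF e] by auto
  have "(x, z) \<in> E\<^sup>*" using tr_conn[OF xN z] .
  thus ?thesis
  proof (induction rule: rtrancl_induct)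
    case base thus ?case using side_self[OF xN] by auto
  next
    case (step u w)
    have wN: "w \<in> N" using tr_edgeN[OF step(2)] by auto
    have edsym: "ed y x = ed x y" by auto
    from step(3) show ?case
    proof
      assume u: "u \<in> tree_side N E x y"
      show ?thesis
      proof (cases "(u, w) \<in> ed x y")
        case True
        thus ?thesis using side_self[OF xN] side_self[OF yN] by auto
      next
        case False
        hence "(u, w) \<in> E - ed x y" using step(2) by auto
        hence "(x, w) \<in> (E - ed x y)\<^sup>*" using u side_iff[OF xN] by (meson rtrancl.rtrancl_into_rtrancl)
        thus ?thesis using side_iff[OF xN] by auto
      qed
    next
      assume u: "u \<in> tree_side N E y x"
      show ?thesis
      proof (cases "(u, w) \<in> ed x y")
        case True
        thus ?thesis using side_self[OF xN] side_self[OF yN] by auto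
      next
        case False
        hence "(u, w) \<in> E - ed y x" using step(2) by auto
        hence "(y, w) \<in> (E - ed y x)\<^sup>*" using u side_iff[OF yN] by (meson rtrancl.rtrancl_into_rtrancl)
        thus ?thesis using side_iff[OF yN] by auto
      qed
    qed
  qed
qed

lemma side_disj:
  assumes e: "(x, y) \<in> E"
  shows "tree_side N E x y \<inter> tree_side N E y x = {}"
proof (rule ccontr)
  assume "\<not> ?thesis"
  then obtain z where z: "z \<in> tree_side N E x y" "z \<in> tree_side N E y x" by auto
  have xN: "x \<in> N" and yN: "y \<in> N" using tr_edgeN[OF e] by auto
  have edsym: "ed y x = ed x y" by auto
  have s: "sym (E - ed x y)" using sym_minus_ed[OF tr_sym] .
  have "(x, z) \<in> (E - ed x y)\<^sup>*" using z(1) side_iff[OF xN] by auto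
  moreover have "(y, z) \<in> (E - ed x y)\<^sup>*" using z(2) side_iff[OF yN] edsym by auto
  hence "(z, y) \<in> (E - ed x y)\<^sup>*" using sym_rtrancl_sym[OF s] by auto
  ultimately have "(x, y) \<in> (E - ed x y)\<^sup>*" by (rule rtrancl_trans)
  thus False using tr_bridge[OF e] by simp
qed

lemma side_other_not: "(x, y) \<in> E \<Longrightarrow> y \<notin> tree_side N E x y"
proof -
  assume e: "(x, y) \<in> E"
  have "y \<in> tree_side N E y x" using side_self tr_edgeN[OF e] by simp
  thus ?thesis using side_disj[OF e] by auto
qed

lemma side_full: "c \<in> N \<Longrightarrow> tree_side N E c c = N"
proof -
  assume c: "c \<in> N"
  have "E - ed c c = E" using tr_irr by auto
  thus ?thesis unfolding tree_side_def using tr_conn[OF c] by auto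
qed

lemma conn_in_side:
  assumes e: "(c, c') \<in> E" and T: "connected_in E T" and cT: "c \<notin> T"
    and t: "t \<in> T" "t \<in> tree_side N E c' c"
  shows "T \<subseteq> tree_side N E c' c"
proof
  fix b assume b: "b \<in> T"
  have c'N: "c' \<in> N" using tr_edgeN[OF e] by auto
  have "(t, b) \<in> (E \<inter> T \<times> T)\<^sup>*" using T t(1) b unfolding connected_in_def by auto
  moreover have "E \<inter> T \<times> T \<subseteq> E - ed c' c" using cT by auto
  ultimately have "(t, b) \<in> (E - ed c' c)\<^sup>*" using rtrancl_mono by blast
  moreover have "(c', t) \<in> (E - ed c' c)\<^sup>*" using t(2) side_iff[OF c'N] by auto
  ultimately have "(c', b) \<in> (E - ed c' c)\<^sup>*" by (meson rtrancl_trans)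
  thus "b \<in> tree_side N E c' c" using side_iff[OF c'N] by auto
qed

lemma side_child:
  assumes c: "c \<in> N" and t: "t \<in> tree_side N E c p" "t \<noteq> c"
  shows "\<exists>c'. (c, c') \<in> E \<and> c' \<noteq> p \<and> t \<in> tree_side N E c' c"
proof -
  have "(c, t) \<in> (E - ed c p)\<^sup>*" using t(1) side_iff[OF c] by auto
  moreover have "c \<noteq> t" using t(2) by simp
  ultimately have "\<exists>x'. (c, x') \<in> E - ed c p \<and> (x', t) \<in> (E - ed c p - ed c x')\<^sup>*"
    by (rule first_step)
  then obtain c' where
    c': "(c, c') \<in> E - ed c p" "(c', t) \<in> (E - ed c p - ed c c')\<^sup>*" by blast
  have "(c', t) \<in> (E - ed c' c)\<^sup>*"
    using c'(2) rtrancl_mono[of "E - ed c p - ed c c'" "E - ed c' c"] by auto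
  moreover have c'N: "c' \<in> N" using c'(1) tr_edgeN by auto
  ultimately have "t \<in> tree_side N E c' c" using side_iff[OF c'N] by auto
  thus ?thesis using c'(1) by auto
qed

lemma side_child_sub:
  assumes e: "(c, c') \<in> E" and p: "c' \<noteq> p"
  shows "tree_side N E c' c \<subseteq> tree_side N E c p - {c}"
proof
  fix z assume z: "z \<in> tree_side N E c' c"
  have cN: "c \<in> N" and c'N: "c' \<in> N" using tr_edgeN[OF e] by auto
  have e': "(c', c) \<in> E" using tr_edge_sym[OF e] .
  have nc: "c \<notin> tree_side N E c' c" using side_other_not[OF e'] .
  have "(c', z) \<in> (E - ed c' c)\<^sup>*" using z side_iff[OF c'N] by auto
  moreover have "\<And>w. (c', w) \<in> (E - ed c' c)\<^sup>* \<Longrightarrow> w \<in> - {c}"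
    using nc side_iff[OF c'N] by auto
  ultimately have "(c', z) \<in> ((E - ed c' c) \<inter> (- {c}) \<times> (- {c}))\<^sup>*" by (rule path_within)
  moreover have "(E - ed c' c) \<inter> (- {c}) \<times> (- {c}) \<subseteq> E - ed c p" by auto
  ultimately have "(c', z) \<in> (E - ed c p)\<^sup>*" using rtrancl_mono by blast
  moreover have "(c, c') \<in> E - ed c p" using e p tr_irr by auto
  ultimately have "(c, z) \<in> (E - ed c p)\<^sup>*" by (meson converse_rtrancl_into_rtrancl)
  hence "z \<in> tree_side N E c p" using side_iff[OF cN] by auto
  moreover have "z \<noteq> c" using z nc by auto
  ultimately show "z \<in> tree_side N E c p - {c}" by auto
qed

end


lemma verts_induced: "verts (induced G S) = S \<inter> verts G"
  unfolding induced_def verts_def by simp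

lemma adj_induced: "adj (induced G S) u v \<longleftrightarrow> adj G u v \<and> u \<in> S \<and> v \<in> S"
  unfolding induced_def adj_def edges_def by auto

lemma alpha_ge:
  assumes G: "finite_graph G" and I: "I \<subseteq> S \<inter> verts G"
    and ni: "\<forall>u\<in>I. \<forall>v\<in>I. \<not> adj G u v"
  shows "card I \<le> alpha (induced G S)"
proof -
  let ?A = "{card I | I. independent (induced G S) I}"
  have "?A \<subseteq> card ` Pow (verts G)" unfolding independent_def verts_induced by auto
  hence f: "finite ?A" using fg_finite[OF G] by (meson finite_Pow_iff finite_imageI finite_subset)
  have "independent (induced G S) I" unfolding independent_def verts_induced adj_induced using I ni by auto
  hence "card I \<in> ?A" by auto
  thus ?thesis unfolding alpha_def using Max_ge[OF f] by auto
qed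

lemma alpha_le:
  assumes G: "finite_graph G" and b: "\<And>I. independent (induced G S) I \<Longrightarrow> card I \<le> b"
  shows "alpha (induced G S) \<le> b"
proof -
  let ?A = "{card I | I. independent (induced G S) I}"
  have "?A \<subseteq> card ` Pow (verts G)" unfolding independent_def verts_induced by auto
  hence f: "finite ?A" using fg_finite[OF G] by (meson finite_Pow_iff finite_imageI finite_subset)
  have "independent (induced G S) {}" unfolding independent_def by auto
  hence ne: "?A \<noteq> {}" by auto
  show ?thesis unfolding alpha_def using Max_le_iff[OF f ne] b by auto
qed

lemma maximal_cliques_finite: "finite_graph G \<Longrightarrow> finite {K. maximal_clique G K}"
proof -
  assume G: "finite_graph G"
  have "{K. maximal_clique G K} \<subseteq> Pow (verts G)" unfolding maximal_clique_def clique_def by auto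
  thus ?thesis using fg_finite[OF G] by (meson finite_Pow_iff finite_subset)
qed

lemma omega_tilde_ge:
  assumes G: "finite_graph G" and K: "maximal_clique G K"
  shows "card {C \<in> eq_classes G. C \<inter> K \<noteq> {}} \<le> omega_tilde G"
proof -
  let ?A = "{card {C \<in> eq_classes G. C \<inter> K \<noteq> {}} | K. maximal_clique G K}"
  have "?A = (\<lambda>K. card {C \<in> eq_classes G. C \<inter> K \<noteq> {}}) ` {K. maximal_clique G K}" by auto
  hence f: "finite (insert 0 ?A)" using maximal_cliques_finite[OF G] by simp
  show ?thesis unfolding omega_tilde_def using Max_ge[OF f] K by auto
qed

lemma alpha_star_ge:
  assumes G: "finite_graph G" and b: "b \<in> verts G"
  shows "alpha (induced G (closed_nbhd G b)) \<le> alpha_star G"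
proof -
  let ?A = "{alpha (induced G (closed_nbhd G v)) | v. v \<in> verts G}"
  have "?A = (\<lambda>v. alpha (induced G (closed_nbhd G v))) ` verts G" by auto
  hence f: "finite (insert 0 ?A)" using fg_finite[OF G] by simp
  show ?thesis unfolding alpha_star_def using Max_ge[OF f] b by auto
qed

lemma cls_ramsey:
  assumes G: "finite_graph G" and om: "omega_tilde G \<le> d" and Y: "Y \<subseteq> verts G"
    and ind: "\<And>I. I \<subseteq> Y \<Longrightarrow> \<forall>u\<in>I. \<forall>v\<in>I. u \<noteq> v \<longrightarrow> \<not> adj G u v \<Longrightarrow> card I \<le> a"
  shows "card (cls G Y) < 2 ^ (Suc d + Suc a)"
proof (rule ccontr)
  assume "\<not> ?thesis"
  hence big: "2 ^ (Suc d + Suc a) \<le> card (cls G Y)" by simp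
  define rep where "rep C = (SOME y. y \<in> C \<inter> Y)" for C
  have rep: "rep C \<in> C \<inter> Y" if "C \<in> cls G Y" for C
  proof -
    have "\<exists>y. y \<in> C \<inter> Y" using that unfolding cls_def by auto
    thus ?thesis unfolding rep_def by (rule someI_ex)
  qed
  have clsC: "C \<in> eq_classes G" if "C \<in> cls G Y" for C using that unfolding cls_def by auto
  have inj: "inj_on rep (cls G Y)"
  proof (rule inj_onI)
    fix C D assume a: "C \<in> cls G Y" "D \<in> cls G Y" "rep C = rep D"
    have "rep C \<in> C" "rep C \<in> D" using rep[OF a(1)] rep[OF a(2)] a(3) by auto
    thus "C = D" using eq_classes_disj[OF clsC[OF a(1)] clsC[OF a(2)]] by blast
  qed
  define A where "A = rep ` cls G Y"
  have cA: "card A = card (cls G Y)" unfolding A_def using card_image[OF inj] .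
  have finA: "finite A" unfolding A_def using cls_finite[OF G] by simp
  have AY: "A \<subseteq> Y" unfolding A_def using rep by auto
  have cls_of: "eq_class G x \<in> cls G Y \<and> rep (eq_class G x) = x" if x: "x \<in> A" for x
  proof -
    obtain C where C: "C \<in> cls G Y" "x = rep C" using x unfolding A_def by auto
    have "x \<in> C" using rep[OF C(1)] C(2) by auto
    hence "C = eq_class G x" using eq_classes_mem[OF clsC[OF C(1)]] by simp
    thus ?thesis using C by auto
  qed
  have big': "2 ^ (Suc d + Suc a) \<le> card A" using big cA by simp
  from ramsey_simple[of "adj G", OF fg_adj_sym[OF G] finA big']
  consider (K) K where "K \<subseteq> A" "card K = Suc d" "\<forall>u\<in>K. \<forall>v\<in>K. u \<noteq> v \<longrightarrow> adj G u v"
    | (I) I where "I \<subseteq> A" "card I = Suc a" "\<forall>u\<in>I. \<forall>v\<in>I. u \<noteq> v \<longrightarrow> \<not> adj G u v"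
    by blast
  thus False
  proof cases
    case K
    have "clique G K" unfolding clique_def using K(1,3) AY Y by auto
    then obtain K' where K': "maximal_clique G K'" "K \<subseteq> K'" using clique_extend[OF G] by blast
    have "eq_class G ` K \<subseteq> {C \<in> eq_classes G. C \<inter> K' \<noteq> {}}"
    proof
      fix C assume "C \<in> eq_class G ` K"
      then obtain x where x: "x \<in> K" "C = eq_class G x" by auto
      have xV: "x \<in> verts G" using x K(1) AY Y by auto
      have "x \<in> C \<inter> K'" using eq_class_self[OF xV] x K'(2) by auto
      moreover have "C \<in> eq_classes G" using eq_class_in[OF xV] x(2) by simp
      ultimately show "C \<in> {C \<in> eq_classes G. C \<inter> K' \<noteq> {}}" by blast
    qed
    moreover have "inj_on (eq_class G) K"
    proof (rule inj_onI)
      fix x y assume "x \<in> K" "y \<in> K" "eq_class G x = eq_class G y"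
      thus "x = y" using cls_of[of x] cls_of[of y] K(1) by auto
    qed
    moreover have "finite {C \<in> eq_classes G. C \<inter> K' \<noteq> {}}" using eq_classes_finite[OF G] by simp
    ultimately have "card (eq_class G ` K) \<le> card {C \<in> eq_classes G. C \<inter> K' \<noteq> {}}"
      "card (eq_class G ` K) = card K"
      by (blast intro: card_mono, blast intro: card_image)
    hence "card K \<le> card {C \<in> eq_classes G. C \<inter> K' \<noteq> {}}" by simp
    also have "\<dots> \<le> omega_tilde G" using omega_tilde_ge[OF G K'(1)] .
    finally show False using K(2) om by simp
  next
    case I
    have "card I \<le> a" using ind[of I] I(1,3) AY by auto
    thus False using I(2) by simp
  qed
qed

definition nbrs :: "'a graph \<Rightarrow> 'a \<Rightarrow> 'a set" where
  "nbrs G b = {u. adj G b u}"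

lemma nbrs_bound:
  assumes G: "finite_graph G" and om: "omega_tilde G \<le> d" and al: "alpha_star G \<le> d"
  shows "card (cls G (nbrs G b)) < 2 ^ (Suc d + Suc d)"
proof (cases "b \<in> verts G")
  case False
  hence "nbrs G b = {}" unfolding nbrs_def using fg_adjD[OF G] by auto
  hence "cls G (nbrs G b) = {}" unfolding cls_def by auto
  thus ?thesis by simp
next
  case True
  show ?thesis
  proof (rule cls_ramsey[OF G om])
    show "nbrs G b \<subseteq> verts G" unfolding nbrs_def using fg_adjD[OF G] by auto
  next
    fix I assume I: "I \<subseteq> nbrs G b" "\<forall>u\<in>I. \<forall>v\<in>I. u \<noteq> v \<longrightarrow> \<not> adj G u v"
    have "I \<subseteq> closed_nbhd G b \<inter> verts G" using I(1) fg_adjD[OF G] unfolding nbrs_def closed_nbhd_def by auto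
    moreover have "\<forall>u\<in>I. \<forall>v\<in>I. \<not> adj G u v" using I(2) fg_adj_irrefl[OF G] by metis
    ultimately have "card I \<le> alpha (induced G (closed_nbhd G b))" by (rule alpha_ge[OF G])
    also have "\<dots> \<le> alpha_star G" by (rule alpha_star_ge[OF G True])
    finally show "card I \<le> d" using al by simp
  qed
qed

lemma max_indep_exists:
  assumes G: "finite_graph G"
  shows "\<exists>R. R \<subseteq> Z \<inter> verts G \<and> gf2_rows_independent G R (verts G - Z) \<and> card R = cutrank G Z"
proof -
  define S where "S = {card R | R. R \<subseteq> Z \<inter> verts G \<and> gf2_rows_independent G R (verts G - Z)}"
  have "S \<subseteq> card ` Pow (Z \<inter> verts G)" unfolding S_def by auto
  moreover have "finite (card ` Pow (Z \<inter> verts G))" using fg_finite[OF G] by simp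
  ultimately have f: "finite S" by (rule finite_subset)
  have "gf2_rows_independent G {} (verts G - Z)" unfolding gf2_rows_independent_def by auto
  hence "card {} = card {} \<and> {} \<subseteq> Z \<inter> verts G \<and> gf2_rows_independent G {} (verts G - Z)" by simp
  hence "\<exists>R. card {} = card R \<and> R \<subseteq> Z \<inter> verts G \<and> gf2_rows_independent G R (verts G - Z)" by (rule exI)
  hence "card {} \<in> S" unfolding S_def by (rule CollectI)
  hence ne: "S \<noteq> {}" by auto
  have "Max S \<in> S" using Max_in[OF f ne] .
  hence "\<exists>R. Max S = card R \<and> R \<subseteq> Z \<inter> verts G \<and> gf2_rows_independent G R (verts G - Z)"
    unfolding S_def by (rule CollectD)
  then obtain R where R: "Max S = card R" "R \<subseteq> Z \<inter> verts G" "gf2_rows_independent G R (verts G - Z)"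
    by blast
  have cS: "cutrank G Z = Max S" unfolding cutrank_def S_def by (rule refl)
  have c: "cutrank G Z = card R" using cS R(1) by (rule trans)
  have "R \<subseteq> Z \<inter> verts G \<and> gf2_rows_independent G R (verts G - Z) \<and> card R = cutrank G Z"
    using R(2,3) c by simp
  thus ?thesis by (rule exI)
qed

lemma span_rows:
  assumes G: "finite_graph G" and R: "R \<subseteq> Z \<inter> verts G" "gf2_rows_independent G R (verts G - Z)"
    "card R = cutrank G Z" and a: "a \<in> Z \<inter> verts G"
  shows "\<exists>T\<subseteq>R. \<forall>y\<in>verts G - Z. adj G a y \<longleftrightarrow> odd (card {x \<in> T. adj G x y})"
proof (cases "a \<in> R")
  case True
  have "\<forall>y\<in>verts G - Z. adj G a y \<longleftrightarrow> odd (card {x \<in> {a}. adj G x y})"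
  proof
    fix y
    have "{x \<in> {a}. adj G x y} = (if adj G a y then {a} else {})" by auto
    thus "adj G a y \<longleftrightarrow> odd (card {x \<in> {a}. adj G x y})" by simp
  qed
  thus ?thesis using True by (intro exI[of _ "{a}"]) auto
next
  case False
  have finR: "finite R" using R(1) fg_finite[OF G] finite_subset by auto
  have c: "card (insert a R) = Suc (cutrank G Z)" using False finR R(3) by simp
  have sub: "insert a R \<subseteq> Z \<inter> verts G" using R(1) a by auto
  have "\<not> gf2_rows_independent G (insert a R) (verts G - Z)"
  proof
    assume h: "gf2_rows_independent G (insert a R) (verts G - Z)"
    have "card (insert a R) \<le> cutrank G Z" by (rule cutrank_ge[OF fg_finite[OF G] sub h])
    thus False using c by simp
  qed
  then obtain S where S: "S \<subseteq> insert a R" "S \<noteq> {}" "\<forall>y\<in>verts G - Z. even (card {x \<in> S. adj G x y})"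
    unfolding gf2_rows_independent_def by blast
  have aS: "a \<in> S"
  proof (rule ccontr)
    assume "a \<notin> S"
    hence "S \<subseteq> R" using S(1) by auto
    hence "\<exists>y\<in>verts G - Z. odd (card {x\<in>S. adj G x y})" using R(2) S(2) unfolding gf2_rows_independent_def by blast
    thus False using S(3) by blast
  qed
  define T where "T = S - {a}"
  have TR: "T \<subseteq> R" using S(1) unfolding T_def by auto
  have finT: "finite T" using TR finR finite_subset by auto
  have "adj G a y \<longleftrightarrow> odd (card {x \<in> T. adj G x y})" if y: "y \<in> verts G - Z" for y
  proof -
    have Seq: "{x \<in> S. adj G x y} = (if adj G a y then insert a {x \<in> T. adj G x y} else {x \<in> T. adj G x y})"
      using aS unfolding T_def by auto
    have na: "a \<notin> {x \<in> T. adj G x y}" unfolding T_def by auto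
    have fT: "finite {x \<in> T. adj G x y}" using finT by simp
    have cI: "card (insert a {x \<in> T. adj G x y}) = Suc (card {x \<in> T. adj G x y})"
      by (rule card_insert_disjoint[OF fT na])
    have cS: "card {x \<in> S. adj G x y} = (if adj G a y then Suc (card {x \<in> T. adj G x y}) else card {x \<in> T. adj G x y})"
      using Seq cI by (cases "adj G a y") simp_all
    have "even (card {x \<in> S. adj G x y})" using S(3) y by auto
    thus ?thesis using cS by (cases "adj G a y") auto
  qed
  thus ?thesis using TR by (intro exI[of _ T]) simp
qed

lemma bd_count:
  assumes G: "finite_graph G" and k: "cutrank G Z \<le> k"
    and M: "\<And>b. card (cls G (nbrs G b)) \<le> M"
  shows "card (cls G {a \<in> Z \<inter> verts G. \<exists>y\<in>verts G - Z. adj G a y}) \<le> 2 ^ k * M"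
proof -
  define D where "D = {a \<in> Z \<inter> verts G. \<exists>y\<in>verts G - Z. adj G a y}"
  obtain R where R: "R \<subseteq> Z \<inter> verts G" "gf2_rows_independent G R (verts G - Z)" "card R = cutrank G Z"
    using max_indep_exists[OF G] by blast
  have finR: "finite R" using R(1) fg_finite[OF G] finite_subset by auto
  define rep where "rep C = (SOME y. y \<in> C \<inter> D)" for C
  have rep: "rep C \<in> C \<inter> D" if "C \<in> cls G D" for C
  proof -
    have "\<exists>y. y \<in> C \<inter> D" using that unfolding cls_def by auto
    thus ?thesis unfolding rep_def by (rule someI_ex)
  qed
  define TT where "TT C = (SOME T. T \<subseteq> R \<and> (\<forall>y\<in>verts G - Z. adj G (rep C) y \<longleftrightarrow> odd (card {x \<in> T. adj G x y})))" for C
  have TT: "TT C \<subseteq> R \<and> (\<forall>y\<in>verts G - Z. adj G (rep C) y \<longleftrightarrow> odd (card {x \<in> TT C. adj G x y}))"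
    if "C \<in> cls G D" for C
  proof -
    have "rep C \<in> Z \<inter> verts G" using rep[OF that] unfolding D_def by auto
    from span_rows[OF G R this] show ?thesis unfolding TT_def by (rule someI_ex[where P="\<lambda>T. T \<subseteq> R \<and> _ T"])
  qed
  define F where "F T = {C \<in> cls G D. TT C = T}" for T
  have cover: "cls G D \<subseteq> (\<Union>T\<in>Pow R. F T)" unfolding F_def using TT by auto
  have Fb: "card (F T) \<le> M" if "T \<in> Pow R" for T
  proof (cases "F T = {}")
    case True thus ?thesis by simp
  next
    case False
    then obtain C0 where C0: "C0 \<in> cls G D" "TT C0 = T" unfolding F_def by auto
    obtain b where b: "b \<in> verts G - Z" "adj G (rep C0) b" using rep[OF C0(1)] unfolding D_def by auto
    have "F T \<subseteq> cls G (nbrs G b)"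
    proof
      fix C assume C: "C \<in> F T"
      hence C1: "C \<in> cls G D" "TT C = T" unfolding F_def by auto
      have "adj G (rep C) b \<longleftrightarrow> odd (card {x \<in> T. adj G x b})" using TT[OF C1(1)] C1(2) b(1) by auto
      moreover have "adj G (rep C0) b \<longleftrightarrow> odd (card {x \<in> T. adj G x b})" using TT[OF C0(1)] C0(2) b(1) by auto
      ultimately have "adj G (rep C) b" using b(2) by simp
      hence "rep C \<in> nbrs G b" unfolding nbrs_def using fg_adj_sym[OF G] by auto
      thus "C \<in> cls G (nbrs G b)" using rep[OF C1(1)] C1(1) unfolding cls_def by auto
    qed
    hence "card (F T) \<le> card (cls G (nbrs G b))" using cls_finite[OF G] by (simp add: card_mono)
    thus ?thesis using M[of b] by simp
  qed
  have "card (cls G D) \<le> card (\<Union>T\<in>Pow R. F T)"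
    using cover by (rule card_mono[rotated]) (use finR cls_finite[OF G] in \<open>auto simp: F_def\<close>)
  also have "\<dots> \<le> (\<Sum>T\<in>Pow R. card (F T))" using finR by (intro card_UN_le) simp
  also have "\<dots> \<le> (\<Sum>T\<in>Pow R. M)" using Fb by (intro sum_mono) auto
  also have "\<dots> = card (Pow R) * M" by simp
  also have "\<dots> = 2 ^ card R * M" using finR by (simp add: card_Pow)
  also have "\<dots> \<le> 2 ^ k * M" using R(3) k by (intro mult_right_mono power_increasing) auto
  finally show ?thesis unfolding D_def .
qed


definition Xs :: "nat set \<Rightarrow> (nat \<times> nat) set \<Rightarrow> (nat \<Rightarrow> 'a) \<Rightarrow> nat \<Rightarrow> nat \<Rightarrow> 'a set" where
  "Xs N E f s t = f ` (tree_leaves N E \<inter> tree_side N E s t)"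

definition bdry :: "'a graph \<Rightarrow> nat set \<Rightarrow> (nat \<times> nat) set \<Rightarrow> (nat \<Rightarrow> 'a) \<Rightarrow> nat \<Rightarrow> nat \<Rightarrow> 'a set" where
  "bdry G N E f t s = {v \<in> verts G. \<exists>w. adj G v w \<and>
     ((v \<in> Xs N E f t s \<and> w \<in> Xs N E f s t) \<or> (v \<in> Xs N E f s t \<and> w \<in> Xs N E f t s))}"

definition rbag :: "'a graph \<Rightarrow> nat set \<Rightarrow> (nat \<times> nat) set \<Rightarrow> (nat \<Rightarrow> 'a) \<Rightarrow> nat \<Rightarrow> 'a set" where
  "rbag G N E f t = (if t \<in> tree_leaves N E then {f t} else {}) \<union> (\<Union>s\<in>{s. (t, s) \<in> E}. bdry G N E f t s)"

lemma bdry_sym: "bdry G N E f t s = bdry G N E f s t"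
  unfolding bdry_def by auto

context
  fixes G :: "'a graph" and N E f
  assumes G: "finite_graph G" and rd: "rank_decomposition G N E f"
begin

lemma rd_tree: "is_tree N E" using rd unfolding rank_decomposition_def by auto

lemma rd_bij: "bij_betw f (tree_leaves N E) (verts G)" using rd unfolding rank_decomposition_def by auto

lemma rd_LN: "tree_leaves N E \<subseteq> N" unfolding tree_leaves_def by auto

definition lf :: "'a \<Rightarrow> nat" where "lf v = inv_into (tree_leaves N E) f v"

lemma lf: "v \<in> verts G \<Longrightarrow> lf v \<in> tree_leaves N E \<and> f (lf v) = v"
proof -
  assume v: "v \<in> verts G"
  have im: "f ` tree_leaves N E = verts G" using rd_bij by (rule bij_betw_imp_surj_on)
  have "v \<in> f ` tree_leaves N E" using v im by simp
  thus ?thesis unfolding lf_def by (simp add: inv_into_into f_inv_into_f)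
qed

lemma lf_f: "t \<in> tree_leaves N E \<Longrightarrow> lf (f t) = t"
  unfolding lf_def using bij_betw_inv_into_left[OF rd_bij] by simp

lemma f_V: "t \<in> tree_leaves N E \<Longrightarrow> f t \<in> verts G"
  using bij_betwE[OF rd_bij] by simp

lemma Xs_sub: "Xs N E f s t \<subseteq> verts G"
  unfolding Xs_def using f_V by auto

lemma memX: "v \<in> verts G \<Longrightarrow> v \<in> Xs N E f s t \<longleftrightarrow> lf v \<in> tree_side N E s t"
proof
  assume v: "v \<in> verts G" "v \<in> Xs N E f s t"
  then obtain t' where t': "t' \<in> tree_leaves N E" "t' \<in> tree_side N E s t" "v = f t'" unfolding Xs_def by auto
  thus "lf v \<in> tree_side N E s t" using lf_f by simp
next
  assume v: "v \<in> verts G" "lf v \<in> tree_side N E s t"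
  have "lf v \<in> tree_leaves N E \<inter> tree_side N E s t" "v = f (lf v)" using lf[OF v(1)] v(2) by auto
  thus "v \<in> Xs N E f s t" unfolding Xs_def by (rule rev_image_eqI)
qed

lemma X_cover: "(s, t) \<in> E \<Longrightarrow> v \<in> verts G \<Longrightarrow> v \<in> Xs N E f s t \<or> v \<in> Xs N E f t s"
proof -
  assume e: "(s, t) \<in> E" and v: "v \<in> verts G"
  have "lf v \<in> N" using lf[OF v] rd_LN by auto
  hence "lf v \<in> tree_side N E s t \<or> lf v \<in> tree_side N E t s" by (rule side_cover[OF rd_tree e])
  thus ?thesis using memX[OF v] by simp
qed

lemma X_disj: "(s, t) \<in> E \<Longrightarrow> v \<in> Xs N E f s t \<Longrightarrow> v \<in> Xs N E f t s \<Longrightarrow> False"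
proof -
  assume e: "(s, t) \<in> E" and a: "v \<in> Xs N E f s t" "v \<in> Xs N E f t s"
  have v: "v \<in> verts G" using a Xs_sub by auto
  show False using a memX[OF v] side_disj[OF rd_tree e] by auto
qed

lemma X_compl: "(s, t) \<in> E \<Longrightarrow> verts G - Xs N E f s t = Xs N E f t s"
proof -
  assume e: "(s, t) \<in> E"
  show ?thesis
  proof
    show "verts G - Xs N E f s t \<subseteq> Xs N E f t s" using X_cover[OF e] by blast
    show "Xs N E f t s \<subseteq> verts G - Xs N E f s t" using X_disj[OF e] Xs_sub[of t s] by blast
  qed
qed

lemma leaf_nbr_unique:
  assumes t: "t \<in> tree_leaves N E" and e1: "(t, s) \<in> E" and e2: "(t, s') \<in> E"
  shows "s = s'"
proof (rule ccontr)
  assume ne: "s \<noteq> s'"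
  have "{s, s'} \<subseteq> {u. (t, u) \<in> E}" using e1 e2 by auto
  moreover have "finite {u. (t, u) \<in> E}"
  proof -
    have "{u. (t, u) \<in> E} \<subseteq> N" using tr_sub[OF rd_tree] by auto
    thus ?thesis using tr_fin[OF rd_tree] by (rule finite_subset)
  qed
  ultimately have "card {s, s'} \<le> tree_degree E t" unfolding tree_degree_def by (rule card_mono[rotated])
  moreover have "tree_degree E t \<le> 1" using t unfolding tree_leaves_def by auto
  ultimately show False using ne by simp
qed

lemma td_edges:
  assumes a: "adj G u v"
  shows "\<exists>t\<in>N. u \<in> rbag G N E f t \<and> v \<in> rbag G N E f t"
proof -
  have uV: "u \<in> verts G" and vV: "v \<in> verts G" using fg_adjD[OF G a] by auto
  have uv: "u \<noteq> v" using a fg_adj_irrefl[OF G] by auto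
  define x where "x = lf u"
  define y where "y = lf v"
  have xL: "x \<in> tree_leaves N E" and yL: "y \<in> tree_leaves N E" using lf uV vV unfolding x_def y_def by auto
  have xN: "x \<in> N" and yN: "y \<in> N" using xL yL rd_LN by auto
  have xy: "x \<noteq> y"
  proof
    assume "x = y"
    hence "f x = f y" by simp
    thus False using lf[OF uV] lf[OF vV] uv unfolding x_def y_def by simp
  qed
  have "(x, y) \<in> E\<^sup>*" using tr_conn[OF rd_tree xN yN] .
  then obtain s where s: "(x, s) \<in> E" using first_step[OF _ xy] by blast
  have "y \<in> tree_side N E s x"
  proof -
    have "y \<in> tree_side N E x s \<or> y \<in> tree_side N E s x" using side_cover[OF rd_tree s yN] .
    moreover have "y \<notin> tree_side N E x s"
    proof
      assume "y \<in> tree_side N E x s"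
      hence "(x, y) \<in> (E - ed x s)\<^sup>*" using side_iff[OF rd_tree xN] by auto
      then obtain s' where "(x, s') \<in> E - ed x s" using first_step[OF _ xy] by blast
      thus False using leaf_nbr_unique[OF xL s] by auto
    qed
    ultimately show ?thesis by auto
  qed
  hence vX: "v \<in> Xs N E f s x" using memX[OF vV] unfolding y_def by simp
  have uX: "u \<in> Xs N E f x s" using memX[OF uV] side_self[OF rd_tree xN] unfolding x_def[symmetric] by simp
  have "u \<in> bdry G N E f x s" "v \<in> bdry G N E f x s" unfolding bdry_def
    using uV vV uX vX a fg_adj_sym[OF G a] by blast+
  thus ?thesis unfolding rbag_def using s xN by blast
qed

lemma td_conn_claim:
  fixes v
  defines "B \<equiv> {t \<in> N. v \<in> rbag G N E f t}"
  shows "\<forall>t s. card (tree_side N E t s) = n \<longrightarrow> (t, s) \<in> E \<longrightarrow> v \<in> bdry G N E f t s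
     \<longrightarrow> lf v \<in> tree_side N E t s \<longrightarrow> (t, lf v) \<in> (E \<inter> B \<times> B)\<^sup>*"
proof (induction n rule: less_induct)
  case (less n)
  show ?case
  proof (intro allI impI)
    fix t s assume n: "card (tree_side N E t s) = n" and e: "(t, s) \<in> E"
      and vb: "v \<in> bdry G N E f t s" and lv: "lf v \<in> tree_side N E t s"
    have tN: "t \<in> N" using tr_edgeN[OF rd_tree e] by auto
    have vV: "v \<in> verts G" using vb unfolding bdry_def by auto
    show "(t, lf v) \<in> (E \<inter> B \<times> B)\<^sup>*"
    proof (cases "t = lf v")
      case True thus ?thesis by simp
    next
      case False
      have vX: "v \<in> Xs N E f t s" using memX[OF vV] lv by simp
      obtain w where w: "adj G v w" "w \<in> Xs N E f s t"
        using vb X_disj[OF e] vX unfolding bdry_def by blast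
      have wV: "w \<in> verts G" using fg_adjD[OF G w(1)] by auto
      have lw: "lf w \<in> tree_side N E s t" using memX[OF wV] w(2) by simp
      obtain t' where t': "(t, t') \<in> E" "t' \<noteq> s" "lf v \<in> tree_side N E t' t"
        using side_child[OF rd_tree tN lv] False by blast
      have "tree_side N E s t \<subseteq> tree_side N E t t' - {t}"
        using side_child_sub[OF rd_tree e t'(2)[symmetric]] by simp
      hence lw': "lf w \<in> tree_side N E t t'" using lw by auto
      have vX': "v \<in> Xs N E f t' t" using memX[OF vV] t'(3) by simp
      have wX': "w \<in> Xs N E f t t'" using memX[OF wV] lw' by simp
      have vb': "v \<in> bdry G N E f t' t" unfolding bdry_def using vV w(1) vX' wX' by blast
      have sub: "tree_side N E t' t \<subseteq> tree_side N E t s - {t}"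
        using side_child_sub[OF rd_tree t'(1) t'(2)] by simp
      have fs: "finite (tree_side N E t s)" using tr_fin[OF rd_tree] side_sub[OF rd_tree] by (rule finite_subset[rotated])
      have "t \<in> tree_side N E t s" using side_self[OF rd_tree tN] .
      hence "tree_side N E t' t \<subset> tree_side N E t s" using sub by blast
      hence lt: "card (tree_side N E t' t) < n" using psubset_card_mono[OF fs] n by simp
      have e': "(t', t) \<in> E" using tr_edge_sym[OF rd_tree t'(1)] .
      have IH: "(t', lf v) \<in> (E \<inter> B \<times> B)\<^sup>*" using less[OF lt] e' vb' t'(3) by blast
      have t'N: "t' \<in> N" using tr_edgeN[OF rd_tree t'(1)] by auto
      have tB: "t \<in> B" unfolding B_def rbag_def using tN e vb by blast
      have t'B: "t' \<in> B" unfolding B_def rbag_def using t'N e' vb' by blast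
      have "(t, t') \<in> E \<inter> B \<times> B" using t'(1) tB t'B by auto
      thus ?thesis using IH by (meson converse_rtrancl_into_rtrancl)
    qed
  qed
qed

lemma td_conn:
  assumes vV: "v \<in> verts G"
  shows "connected_in E {t \<in> N. v \<in> rbag G N E f t}"
proof -
  define B where "B = {t \<in> N. v \<in> rbag G N E f t}"
  have toL: "(t, lf v) \<in> (E \<inter> B \<times> B)\<^sup>*" if t: "t \<in> B" for t
  proof -
    have tN: "t \<in> N" and vt: "v \<in> rbag G N E f t" using t unfolding B_def by auto
    have "v \<in> (if t \<in> tree_leaves N E then {f t} else {}) \<or> (\<exists>s\<in>{s. (t, s) \<in> E}. v \<in> bdry G N E f t s)"
      using vt unfolding rbag_def by blast
    then consider (leaf) "t \<in> tree_leaves N E" "v = f t" | (bd) s where "(t, s) \<in> E" "v \<in> bdry G N E f t s"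
      by (cases "t \<in> tree_leaves N E") auto
    thus ?thesis
    proof cases
      case leaf thus ?thesis using lf_f by simp
    next
      case bd
      have "lf v \<in> N" using lf[OF vV] rd_LN by auto
      hence "lf v \<in> tree_side N E t s \<or> lf v \<in> tree_side N E s t" using side_cover[OF rd_tree bd(1)] by simp
      thus ?thesis
      proof
        assume "lf v \<in> tree_side N E t s"
        note h0 = td_conn_claim[where v=v and n="card (tree_side N E t s)", THEN spec[of _ t], THEN spec[of _ s]]
        show ?thesis using mp[OF mp[OF mp[OF mp[OF h0 refl] bd(1)] bd(2)] \<open>lf v \<in> tree_side N E t s\<close>]
          unfolding B_def .
      next
        assume l: "lf v \<in> tree_side N E s t"
        have e': "(s, t) \<in> E" using tr_edge_sym[OF rd_tree bd(1)] .
        have vb': "v \<in> bdry G N E f s t" using bd(2) bdry_sym[of G N E f t s] by simp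
        note h0 = td_conn_claim[where v=v and n="card (tree_side N E s t)", THEN spec[of _ s], THEN spec[of _ t]]
        have "(s, lf v) \<in> (E \<inter> B \<times> B)\<^sup>*" using mp[OF mp[OF mp[OF mp[OF h0 refl] e'] vb'] l]
          unfolding B_def .
        moreover have "s \<in> B" unfolding B_def rbag_def using tr_edgeN[OF rd_tree e'] e' vb' by blast
        moreover have "(t, s) \<in> E \<inter> B \<times> B" using t bd(1) \<open>s \<in> B\<close> by simp
        ultimately show ?thesis by (meson converse_rtrancl_into_rtrancl)
      qed
    qed
  qed
  have s: "sym (E \<inter> B \<times> B)" using tr_sym[OF rd_tree] unfolding sym_def by auto
  show ?thesis unfolding connected_in_def B_def[symmetric]
  proof (intro ballI)
    fix x y assume "x \<in> B" "y \<in> B"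
    hence "(x, lf v) \<in> (E \<inter> B \<times> B)\<^sup>*" "(y, lf v) \<in> (E \<inter> B \<times> B)\<^sup>*" using toL by auto
    hence "(x, lf v) \<in> (E \<inter> B \<times> B)\<^sup>*" "(lf v, y) \<in> (E \<inter> B \<times> B)\<^sup>*" using sym_rtrancl_sym[OF s] by auto
    thus "(x, y) \<in> (E \<inter> B \<times> B)\<^sup>*" by (rule rtrancl_trans)
  qed
qed

lemma rd_td: "tree_decomposition G N E (rbag G N E f)"
  unfolding tree_decomposition_def
proof (intro conjI)
  show "is_tree N E" by (rule rd_tree)
  show "\<forall>t\<in>N. rbag G N E f t \<subseteq> verts G" unfolding rbag_def bdry_def using f_V by auto
  show "\<forall>v\<in>verts G. \<exists>t\<in>N. v \<in> rbag G N E f t"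
  proof
    fix v assume v: "v \<in> verts G"
    hence "lf v \<in> N" "v \<in> rbag G N E f (lf v)" using lf[OF v] rd_LN unfolding rbag_def by auto
    thus "\<exists>t\<in>N. v \<in> rbag G N E f t" by blast
  qed
  show "\<forall>u v. adj G u v \<longrightarrow> (\<exists>t\<in>N. u \<in> rbag G N E f t \<and> v \<in> rbag G N E f t)" using td_edges by blast
  show "\<forall>v\<in>verts G. connected_in E {t \<in> N. v \<in> rbag G N E f t}" using td_conn by blast
qed

lemma rd_bag_count:
  assumes k: "\<forall>(s, t)\<in>E. cutrank G (f ` (tree_leaves N E \<inter> tree_side N E s t)) \<le> k"
    and M: "\<And>b. card (cls G (nbrs G b)) \<le> M" and tN: "t \<in> N"
  shows "card (cls G (rbag G N E f t)) \<le> 1 + 3 * (2 * (2 ^ k * M))"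
proof -
  define nb where "nb = {s. (t, s) \<in> E}"
  have finnb: "finite nb"
  proof -
    have "nb \<subseteq> N" unfolding nb_def using tr_sub[OF rd_tree] by auto
    thus ?thesis using tr_fin[OF rd_tree] by (rule finite_subset)
  qed
  have cd: "card nb = tree_degree E t" unfolding nb_def tree_degree_def by (rule refl)
  have cnb: "card nb \<le> 3"
  proof (cases "t \<in> tree_leaves N E")
    case True
    hence "tree_degree E t \<le> 1" unfolding tree_leaves_def by simp
    thus ?thesis using cd by simp
  next
    case False
    hence "t \<in> N - tree_leaves N E" using tN by simp
    hence "tree_degree E t = 3" using rd unfolding rank_decomposition_def by blast
    thus ?thesis using cd by simp
  qed
  have bd: "card (cls G (bdry G N E f t s)) \<le> 2 * (2 ^ k * M)" if s: "s \<in> nb" for s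
  proof -
    have e: "(t, s) \<in> E" using s unfolding nb_def by auto
    have e': "(s, t) \<in> E" using tr_edge_sym[OF rd_tree e] .
    let ?Z1 = "Xs N E f t s" and ?Z2 = "Xs N E f s t"
    have k1: "cutrank G ?Z1 \<le> k" using k e unfolding Xs_def by auto
    have k2: "cutrank G ?Z2 \<le> k" using k e' unfolding Xs_def by auto
    define D1 where "D1 = {a \<in> ?Z1 \<inter> verts G. \<exists>y\<in>verts G - ?Z1. adj G a y}"
    define D2 where "D2 = {a \<in> ?Z2 \<inter> verts G. \<exists>y\<in>verts G - ?Z2. adj G a y}"
    have "bdry G N E f t s \<subseteq> D1 \<union> D2"
    proof
      fix v assume v: "v \<in> bdry G N E f t s"
      then obtain w where w: "v \<in> verts G" "adj G v w"
        "(v \<in> ?Z1 \<and> w \<in> ?Z2) \<or> (v \<in> ?Z2 \<and> w \<in> ?Z1)" unfolding bdry_def by blast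
      have wV: "w \<in> verts G" using fg_adjD[OF G w(2)] by simp
      from w(3) show "v \<in> D1 \<union> D2"
      proof
        assume a: "v \<in> ?Z1 \<and> w \<in> ?Z2"
        hence "w \<in> verts G - ?Z1" using X_compl[OF e] by simp
        hence "v \<in> D1" unfolding D1_def using a w(1,2) by blast
        thus ?thesis by simp
      next
        assume a: "v \<in> ?Z2 \<and> w \<in> ?Z1"
        hence "w \<in> verts G - ?Z2" using X_compl[OF e'] by simp
        hence "v \<in> D2" unfolding D2_def using a w(1,2) by blast
        thus ?thesis by simp
      qed
    qed
    hence "cls G (bdry G N E f t s) \<subseteq> cls G (D1 \<union> D2)" by (rule cls_mono)
    hence "card (cls G (bdry G N E f t s)) \<le> card (cls G (D1 \<union> D2))"
      using cls_finite[OF G] by (rule card_mono[rotated])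
    also have "\<dots> \<le> card (cls G D1) + card (cls G D2)" unfolding cls_Un by (rule card_Un_le)
    also have "\<dots> \<le> 2 ^ k * M + 2 ^ k * M"
      using bd_count[OF G k1 M] bd_count[OF G k2 M] unfolding D1_def D2_def by (intro add_mono)
    finally show ?thesis by simp
  qed
  have "rbag G N E f t \<subseteq> (if t \<in> tree_leaves N E then {f t} else {}) \<union> (\<Union>s\<in>nb. bdry G N E f t s)"
    unfolding rbag_def nb_def by auto
  hence "cls G (rbag G N E f t) \<subseteq> cls G ((if t \<in> tree_leaves N E then {f t} else {}) \<union> (\<Union>s\<in>nb. bdry G N E f t s))"
    by (rule cls_mono)
  also have "\<dots> = cls G (if t \<in> tree_leaves N E then {f t} else {}) \<union> (\<Union>s\<in>nb. cls G (bdry G N E f t s))"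
    unfolding cls_def by blast
  finally have "cls G (rbag G N E f t) \<subseteq> cls G (if t \<in> tree_leaves N E then {f t} else {}) \<union> (\<Union>s\<in>nb. cls G (bdry G N E f t s))" .
  hence "card (cls G (rbag G N E f t)) \<le> card (cls G (if t \<in> tree_leaves N E then {f t} else {}) \<union> (\<Union>s\<in>nb. cls G (bdry G N E f t s)))"
    using cls_finite[OF G] finnb by (intro card_mono) (simp_all add: cls_finite[OF G])
  also have "\<dots> \<le> card (cls G (if t \<in> tree_leaves N E then {f t} else {})) + card (\<Union>s\<in>nb. cls G (bdry G N E f t s))"
    by (rule card_Un_le)
  also have "\<dots> \<le> 1 + (\<Sum>s\<in>nb. card (cls G (bdry G N E f t s)))"
  proof (rule add_mono)
    show "card (cls G (if t \<in> tree_leaves N E then {f t} else {})) \<le> 1"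
      using card_cls_le[of "if t \<in> tree_leaves N E then {f t} else {}" G] by (cases "t \<in> tree_leaves N E") simp_all
    show "card (\<Union>s\<in>nb. cls G (bdry G N E f t s)) \<le> (\<Sum>s\<in>nb. card (cls G (bdry G N E f t s)))"
      using finnb by (rule card_UN_le)
  qed
  also have "\<dots> \<le> 1 + (\<Sum>s\<in>nb. 2 * (2 ^ k * M))" using bd by (intro add_left_mono sum_mono) auto
  also have "\<dots> = 1 + card nb * (2 * (2 ^ k * M))" by simp
  also have "\<dots> \<le> 1 + 3 * (2 * (2 ^ k * M))" using cnb by (intro add_left_mono mult_right_mono) auto
  finally show ?thesis .
qed

end

lemma rd_to_td:
  assumes G: "finite_graph G" and rd: "rank_decomposition G N E f"
    and k: "\<forall>(s, t)\<in>E. cutrank G (f ` (tree_leaves N E \<inter> tree_side N E s t)) \<le> k"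
    and M: "\<And>b. card (cls G (nbrs G b)) \<le> M"
  shows "\<exists>bag. tree_decomposition G N E bag \<and> (\<forall>t\<in>N. card (cls G (bag t)) \<le> 1 + 3 * (2 * (2 ^ k * M)))"
  using rd_td[OF G rd] rd_bag_count[OF G rd k M] by blast


lemma verts_quot: "verts (clique_quotient G) = eq_classes G"
  unfolding clique_quotient_def verts_def by simp

lemma adj_quot: "adj (clique_quotient G) C D \<longleftrightarrow>
  C \<in> eq_classes G \<and> D \<in> eq_classes G \<and> C \<noteq> D \<and> (\<exists>u\<in>C. \<exists>v\<in>D. adj G u v)"
  unfolding clique_quotient_def adj_def edges_def by simp

lemma td_tree: "tree_decomposition G N E bag \<Longrightarrow> is_tree N E"
  unfolding tree_decomposition_def by simp

lemma conn_mono_rt: "A \<subseteq> U \<Longrightarrow> (x, y) \<in> (E \<inter> A \<times> A)\<^sup>* \<Longrightarrow> (x, y) \<in> (E \<inter> U \<times> U)\<^sup>*"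
proof -
  assume "A \<subseteq> U" "(x, y) \<in> (E \<inter> A \<times> A)\<^sup>*"
  moreover have "E \<inter> A \<times> A \<subseteq> E \<inter> U \<times> U" using \<open>A \<subseteq> U\<close> by auto
  ultimately show ?thesis using rtrancl_mono by blast
qed

lemma cw_of_quot:
  assumes G: "finite_graph G" and td: "tree_decomposition (clique_quotient G) N E bagQ"
    and w: "\<forall>t\<in>N. card (bagQ t) \<le> w"
  shows "tree_decomposition G N E (\<lambda>t. \<Union>(bagQ t)) \<and> (\<forall>t\<in>N. card (cls G (\<Union>(bagQ t))) \<le> w)"
proof -
  have tdQ: "is_tree N E" "\<forall>t\<in>N. bagQ t \<subseteq> eq_classes G"
    "\<forall>C\<in>eq_classes G. \<exists>t\<in>N. C \<in> bagQ t"
    "\<forall>C D. adj (clique_quotient G) C D \<longrightarrow> (\<exists>t\<in>N. C \<in> bagQ t \<and> D \<in> bagQ t)"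
    "\<forall>C\<in>eq_classes G. connected_in E {t \<in> N. C \<in> bagQ t}"
    using td unfolding tree_decomposition_def verts_quot by auto
  have cls_eq: "{t \<in> N. v \<in> \<Union>(bagQ t)} = {t \<in> N. eq_class G v \<in> bagQ t}" if v: "v \<in> verts G" for v
  proof -
    have "v \<in> \<Union>(bagQ t) \<longleftrightarrow> eq_class G v \<in> bagQ t" if t: "t \<in> N" for t
    proof
      assume "v \<in> \<Union>(bagQ t)"
      then obtain C where C: "C \<in> bagQ t" "v \<in> C" by auto
      have "C \<in> eq_classes G" using C(1) tdQ(2) t by auto
      hence "C = eq_class G v" using eq_classes_mem[of C G v] C(2) by simp
      thus "eq_class G v \<in> bagQ t" using C(1) by simp
    next
      assume "eq_class G v \<in> bagQ t"
      thus "v \<in> \<Union>(bagQ t)" using eq_class_self[OF v] by blast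
    qed
    thus ?thesis by blast
  qed
  have "tree_decomposition G N E (\<lambda>t. \<Union>(bagQ t))"
    unfolding tree_decomposition_def
  proof (intro conjI)
    show "is_tree N E" by (rule tdQ(1))
    show "\<forall>t\<in>N. \<Union>(bagQ t) \<subseteq> verts G"
    proof (intro ballI subsetI)
      fix t x assume t: "t \<in> N" and x: "x \<in> \<Union>(bagQ t)"
      then obtain C where "C \<in> bagQ t" "x \<in> C" by blast
      thus "x \<in> verts G" using tdQ(2) t eq_classes_sub[of C G] by auto
    qed
    show "\<forall>v\<in>verts G. \<exists>t\<in>N. v \<in> \<Union>(bagQ t)"
    proof
      fix v assume v: "v \<in> verts G"
      obtain t where "t \<in> N" "eq_class G v \<in> bagQ t" using tdQ(3) eq_class_in[OF v] by blast
      thus "\<exists>t\<in>N. v \<in> \<Union>(bagQ t)" using eq_class_self[OF v] by blast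
    qed
    show "\<forall>u v. adj G u v \<longrightarrow> (\<exists>t\<in>N. u \<in> \<Union>(bagQ t) \<and> v \<in> \<Union>(bagQ t))"
    proof (intro allI impI)
      fix u v assume a: "adj G u v"
      have uV: "u \<in> verts G" and vV: "v \<in> verts G" using fg_adjD[OF G a] by auto
      show "\<exists>t\<in>N. u \<in> \<Union>(bagQ t) \<and> v \<in> \<Union>(bagQ t)"
      proof (cases "eq_class G u = eq_class G v")
        case True
        obtain t where t: "t \<in> N" "eq_class G u \<in> bagQ t" using tdQ(3) eq_class_in[OF uV] by blast
        have "u \<in> eq_class G u" "v \<in> eq_class G u" using eq_class_self[OF uV] eq_class_self[OF vV] True by simp_all
        thus ?thesis using t by blast
      next
        case False
        have "adj (clique_quotient G) (eq_class G u) (eq_class G v)"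
          unfolding adj_quot
        proof (intro conjI)
          show "eq_class G u \<in> eq_classes G" "eq_class G v \<in> eq_classes G" using eq_class_in[OF uV] eq_class_in[OF vV] by auto
          show "eq_class G u \<noteq> eq_class G v" by (rule False)
          show "\<exists>u'\<in>eq_class G u. \<exists>v'\<in>eq_class G v. adj G u' v'"
            using eq_class_self[OF uV] eq_class_self[OF vV] a by blast
        qed
        then obtain t where "t \<in> N" "eq_class G u \<in> bagQ t" "eq_class G v \<in> bagQ t" using tdQ(4) by blast
        thus ?thesis using eq_class_self[OF uV] eq_class_self[OF vV] by blast
      qed
    qed
    show "\<forall>v\<in>verts G. connected_in E {t \<in> N. v \<in> \<Union>(bagQ t)}"
    proof
      fix v assume v: "v \<in> verts G"
      have "connected_in E {t \<in> N. eq_class G v \<in> bagQ t}" using tdQ(5) eq_class_in[OF v] by blast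
      thus "connected_in E {t \<in> N. v \<in> \<Union>(bagQ t)}" unfolding cls_eq[OF v] .
    qed
  qed
  moreover have "card (cls G (\<Union>(bagQ t))) \<le> w" if t: "t \<in> N" for t
  proof -
    have "cls G (\<Union>(bagQ t)) \<subseteq> bagQ t"
    proof
      fix C assume "C \<in> cls G (\<Union>(bagQ t))"
      then obtain u D where "C \<in> eq_classes G" "u \<in> C" "u \<in> D" "D \<in> bagQ t" unfolding cls_def by auto
      moreover hence "D \<in> eq_classes G" using tdQ(2) t by auto
      ultimately show "C \<in> bagQ t" using eq_classes_disj[of C G D u] by simp
    qed
    moreover have "finite (bagQ t)" using tdQ(2) t eq_classes_finite[OF G] by (meson finite_subset)
    ultimately have "card (cls G (\<Union>(bagQ t))) \<le> card (bagQ t)" by (rule card_mono[rotated])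
    thus ?thesis using w t by auto
  qed
  ultimately show ?thesis by blast
qed

lemma quot_of_cw:
  assumes G: "finite_graph G" and td: "tree_decomposition G N E bag"
    and w: "\<forall>t\<in>N. card (cls G (bag t)) \<le> w"
  shows "tree_decomposition (clique_quotient G) N E (\<lambda>t. cls G (bag t)) \<and> (\<forall>t\<in>N. card (cls G (bag t)) \<le> w)"
proof -
  have tdG: "is_tree N E" "\<forall>t\<in>N. bag t \<subseteq> verts G" "\<forall>v\<in>verts G. \<exists>t\<in>N. v \<in> bag t"
    "\<forall>u v. adj G u v \<longrightarrow> (\<exists>t\<in>N. u \<in> bag t \<and> v \<in> bag t)"
    "\<forall>v\<in>verts G. connected_in E {t \<in> N. v \<in> bag t}"
    using td unfolding tree_decomposition_def by auto
  have conn: "connected_in E {t \<in> N. C \<in> cls G (bag t)}" if C: "C \<in> eq_classes G" for C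
  proof -
    obtain v0 where v0: "v0 \<in> verts G" "C = eq_class G v0" using C unfolding eq_classes_def by auto
    define U where "U = {t \<in> N. C \<in> cls G (bag t)}"
    define S where "S v = {t \<in> N. v \<in> bag t}" for v
    have SU: "S u \<subseteq> U" if "u \<in> C" for u
    proof
      fix t assume "t \<in> S u"
      hence "t \<in> N" "u \<in> bag t" unfolding S_def by auto
      hence "C \<inter> bag t \<noteq> {}" using that by auto
      thus "t \<in> U" unfolding U_def cls_def using C \<open>t \<in> N\<close> by simp
    qed
    have Sconn: "(x, y) \<in> (E \<inter> S u \<times> S u)\<^sup>*" if "u \<in> C" "x \<in> S u" "y \<in> S u" for u x y
    proof -
      have "u \<in> verts G" using that(1) eq_classes_sub[OF C] by auto
      hence "connected_in E (S u)" using tdG(5) unfolding S_def by blast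
      thus ?thesis using that(2,3) unfolding connected_in_def by blast
    qed
    have meet: "\<exists>a. a \<in> S u \<and> a \<in> S v0" if u: "u \<in> C" for u
    proof (cases "u = v0")
      case True
      have "\<exists>t\<in>N. v0 \<in> bag t" using tdG(3) v0(1) by blast
      thus ?thesis using True unfolding S_def by auto
    next
      case False
      have "clique_equiv G v0 u" using u v0 unfolding eq_class_def by simp
      hence "adj G v0 u" using twin_adj[OF G _ False[symmetric]] by simp
      then obtain t where "t \<in> N" "v0 \<in> bag t" "u \<in> bag t" using tdG(4) by blast
      thus ?thesis unfolding S_def by auto
    qed
    have v0C: "v0 \<in> C" using eq_class_self[OF v0(1)] v0(2) by simp
    have toS: "\<exists>a. a \<in> S v0 \<and> (x, a) \<in> (E \<inter> U \<times> U)\<^sup>*" if x: "x \<in> U" for x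
    proof -
      obtain u where u: "u \<in> C" "u \<in> bag x" using x unfolding U_def cls_def by auto
      have xS: "x \<in> S u" using u x unfolding S_def U_def by auto
      obtain a where a: "a \<in> S u" "a \<in> S v0" using meet[OF u(1)] by blast
      have "(x, a) \<in> (E \<inter> S u \<times> S u)\<^sup>*" using Sconn[OF u(1) xS a(1)] .
      hence "(x, a) \<in> (E \<inter> U \<times> U)\<^sup>*" using conn_mono_rt[OF SU[OF u(1)]] by blast
      thus ?thesis using a(2) by blast
    qed
    have symU: "sym (E \<inter> U \<times> U)" using tr_sym[OF tdG(1)] unfolding sym_def by auto
    show ?thesis unfolding connected_in_def U_def[symmetric]
    proof (intro ballI)
      fix x y assume x: "x \<in> U" and y: "y \<in> U"
      obtain a where a: "a \<in> S v0" "(x, a) \<in> (E \<inter> U \<times> U)\<^sup>*" using toS[OF x] by blast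
      obtain b where b: "b \<in> S v0" "(y, b) \<in> (E \<inter> U \<times> U)\<^sup>*" using toS[OF y] by blast
      have "(a, b) \<in> (E \<inter> S v0 \<times> S v0)\<^sup>*" using Sconn[OF v0C a(1) b(1)] .
      hence ab: "(a, b) \<in> (E \<inter> U \<times> U)\<^sup>*" using conn_mono_rt[OF SU[OF v0C]] by blast
      have "(b, y) \<in> (E \<inter> U \<times> U)\<^sup>*" using sym_rtrancl_sym[OF symU b(2)] .
      thus "(x, y) \<in> (E \<inter> U \<times> U)\<^sup>*" using a(2) ab by (meson rtrancl_trans)
    qed
  qed
  have "tree_decomposition (clique_quotient G) N E (\<lambda>t. cls G (bag t))"
    unfolding tree_decomposition_def verts_quot
  proof (intro conjI)
    show "is_tree N E" by (rule tdG(1))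
    show "\<forall>t\<in>N. cls G (bag t) \<subseteq> eq_classes G" unfolding cls_def by auto
    show "\<forall>C\<in>eq_classes G. \<exists>t\<in>N. C \<in> cls G (bag t)"
    proof
      fix C assume C: "C \<in> eq_classes G"
      obtain v0 where v0: "v0 \<in> verts G" "C = eq_class G v0" using C unfolding eq_classes_def by auto
      obtain t where t: "t \<in> N" "v0 \<in> bag t" using tdG(3) v0(1) by blast
      have "v0 \<in> C" using eq_class_self[OF v0(1)] v0(2) by simp
      hence "C \<in> cls G (bag t)" unfolding cls_def using C t(2) by auto
      thus "\<exists>t\<in>N. C \<in> cls G (bag t)" using t(1) by blast
    qed
    show "\<forall>C D. adj (clique_quotient G) C D \<longrightarrow> (\<exists>t\<in>N. C \<in> cls G (bag t) \<and> D \<in> cls G (bag t))"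
    proof (intro allI impI)
      fix C D assume "adj (clique_quotient G) C D"
      then obtain u v where uv: "C \<in> eq_classes G" "D \<in> eq_classes G" "u \<in> C" "v \<in> D" "adj G u v"
        unfolding adj_quot by blast
      obtain t where "t \<in> N" "u \<in> bag t" "v \<in> bag t" using tdG(4) uv(5) by blast
      hence "C \<in> cls G (bag t)" "D \<in> cls G (bag t)" unfolding cls_def using uv by auto
      thus "\<exists>t\<in>N. C \<in> cls G (bag t) \<and> D \<in> cls G (bag t)" using \<open>t \<in> N\<close> by blast
    qed
    show "\<forall>C\<in>eq_classes G. connected_in E {t \<in> N. C \<in> cls G (bag t)}" using conn by blast
  qed
  thus ?thesis using w by blast
qed

lemma alpha_of_cw:
  assumes G: "finite_graph G" and B: "B \<subseteq> verts G"
  shows "alpha (induced G B) \<le> card (cls G B)"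
proof (rule alpha_le[OF G])
  fix I assume I: "independent (induced G B) I"
  have IB: "I \<subseteq> B \<inter> verts G" and ni: "\<forall>u\<in>I. \<forall>v\<in>I. \<not> adj G u v"
    using I unfolding independent_def verts_induced adj_induced by auto
  have "inj_on (eq_class G) I"
  proof (rule inj_onI, rule ccontr)
    fix x y assume a: "x \<in> I" "y \<in> I" "eq_class G x = eq_class G y" "x \<noteq> y"
    have "y \<in> verts G" using IB a(2) by auto
    hence "y \<in> eq_class G x" using a(3) eq_class_self[of y G] by simp
    hence "clique_equiv G x y" unfolding eq_class_def by simp
    hence "adj G x y" using twin_adj[OF G _ a(4)] by simp
    thus False using ni a(1,2) by auto
  qed
  moreover have "eq_class G ` I \<subseteq> cls G B"
  proof
    fix C assume "C \<in> eq_class G ` I"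
    then obtain x where x: "x \<in> I" "C = eq_class G x" by auto
    have xV: "x \<in> verts G" using x(1) IB by auto
    have "x \<in> C \<inter> B" using eq_class_self[OF xV] x IB by auto
    thus "C \<in> cls G B" unfolding cls_def using eq_class_in[OF xV] x(2) by auto
  qed
  ultimately show "card I \<le> card (cls G B)" using card_inj_on_le[OF _ _ cls_finite[OF G]] by blast
qed

lemma cw_of_alpha:
  assumes G: "finite_graph G" and om: "omega_tilde G \<le> d" and B: "B \<subseteq> verts G"
    and k: "alpha (induced G B) \<le> k"
  shows "card (cls G B) < 2 ^ (Suc d + Suc k)"
proof (rule cls_ramsey[OF G om B])
  fix I assume I: "I \<subseteq> B" "\<forall>u\<in>I. \<forall>v\<in>I. u \<noteq> v \<longrightarrow> \<not> adj G u v"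
  have "\<forall>u\<in>I. \<forall>v\<in>I. \<not> adj G u v"
  proof (intro ballI)
    fix u v assume "u \<in> I" "v \<in> I"
    thus "\<not> adj G u v" using I(2) fg_adj_irrefl[OF G, of u] by (cases "u = v") auto
  qed
  moreover have "I \<subseteq> B \<inter> verts G" using I(1) B by auto
  ultimately have "card I \<le> alpha (induced G B)" using alpha_ge[OF G] by blast
  thus "card I \<le> k" using k by simp
qed

lemma trivial_td:
  assumes G: "finite_graph G"
  shows "tree_decomposition G {0} {} (\<lambda>_. verts G)"
  unfolding tree_decomposition_def is_tree_def connected_in_def using fg_adjD[OF G] by auto


definition desc :: "nat \<Rightarrow> nat \<Rightarrow> bool" where
  "desc m k \<longleftrightarrow> (\<exists>i. k div 2 ^ i = m)"

lemma desc_refl: "desc m m"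
  unfolding desc_def by (intro exI[of _ 0]) simp

lemma div_pow_Suc: "(k::nat) div 2 ^ Suc i = (k div 2) div 2 ^ i"
  by (simp add: div_mult2_eq)

lemma desc_child: "desc m k \<Longrightarrow> desc m (2 * k)" "desc m k \<Longrightarrow> desc m (2 * k + 1)"
proof -
  assume "desc m k"
  then obtain i where i: "k div 2 ^ i = m" unfolding desc_def by auto
  have "(2 * k) div 2 ^ Suc i = m" using i by (simp only: div_pow_Suc) simp
  thus "desc m (2 * k)" unfolding desc_def by blast
  have "(2 * k + 1) div 2 ^ Suc i = m" using i by (simp only: div_pow_Suc) simp
  thus "desc m (2 * k + 1)" unfolding desc_def by blast
qed

lemma desc_parent: "desc m k \<Longrightarrow> k \<noteq> m \<Longrightarrow> desc m (k div 2)"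
proof -
  assume "desc m k" "k \<noteq> m"
  then obtain i where i: "k div 2 ^ i = m" unfolding desc_def by auto
  with \<open>k \<noteq> m\<close> obtain j where "i = Suc j" by (cases i) auto
  hence "(k div 2) div 2 ^ j = m" using i by (simp only: div_pow_Suc)
  thus ?thesis unfolding desc_def by blast
qed

lemma desc_le: "desc m k \<Longrightarrow> m \<le> k"
proof -
  assume "desc m k"
  then obtain i where "k div 2 ^ i = m" unfolding desc_def by auto
  thus ?thesis using div_le_dividend[of k "2 ^ i"] by simp
qed

lemma desc_le2: "desc m k \<Longrightarrow> k \<noteq> m \<Longrightarrow> 2 * m \<le> k"
proof -
  assume "desc m k" "k \<noteq> m"
  hence "desc m (k div 2)" by (rule desc_parent)
  hence "m \<le> k div 2" by (rule desc_le)
  thus ?thesis by simp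
qed

lemma desc_trans: "desc a b \<Longrightarrow> desc b c \<Longrightarrow> desc a c"
proof -
  assume "desc a b" "desc b c"
  then obtain i j where i: "b div 2 ^ i = a" and j: "c div 2 ^ j = b" unfolding desc_def by auto
  have "c div 2 ^ (j + i) = a" using i j by (simp add: power_add div_mult2_eq)
  thus ?thesis unfolding desc_def by blast
qed

lemma div_pow_le_half: "d \<ge> 1 \<Longrightarrow> (a::nat) div 2 ^ d \<le> a div 2"
proof -
  assume "d \<ge> 1"
  hence "(2::nat) ^ 1 \<le> 2 ^ d" by (intro power_increasing) auto
  hence "(2::nat) \<le> 2 ^ d" by simp
  thus ?thesis by (rule div_le_mono2[rotated]) simp
qed

lemma desc_disj: "m \<ge> 1 \<Longrightarrow> desc (2 * m) k \<Longrightarrow> desc (2 * m + 1) k \<Longrightarrow> False"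
proof -
  assume m: "m \<ge> 1" and a: "desc (2 * m) k" "desc (2 * m + 1) k"
  obtain i j where i: "k div 2 ^ i = 2 * m" and j: "k div 2 ^ j = 2 * m + 1" using a unfolding desc_def by auto
  consider "i = j" | "i < j" | "j < i" by linarith
  thus False
  proof cases
    case 1 thus False using i j by simp
  next
    case 2
    define d where "d = j - i"
    have d: "j = i + d" "d \<ge> 1" using 2 unfolding d_def by auto
    have "k div 2 ^ j = (k div 2 ^ i) div 2 ^ d" using d(1) by (simp add: power_add div_mult2_eq)
    also have "\<dots> \<le> (2 * m) div 2" using i div_pow_le_half[OF d(2), of "2 * m"] by simp
    finally show False using j by simp
  next
    case 3
    define d where "d = i - j"
    have d: "i = j + d" "d \<ge> 1" using 3 unfolding d_def by auto
    have "k div 2 ^ i = (k div 2 ^ j) div 2 ^ d" using d(1) by (simp add: power_add div_mult2_eq)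
    also have "\<dots> \<le> (2 * m + 1) div 2" using j div_pow_le_half[OF d(2), of "2 * m + 1"] by simp
    finally show False using i m by simp
  qed
qed

datatype 'a bt = Lf 'a | Nd "'a bt" "'a bt"

primrec lvs :: "'a bt \<Rightarrow> 'a set" where
  "lvs (Lf a) = {a}" | "lvs (Nd l r) = lvs l \<union> lvs r"

primrec dst :: "'a bt \<Rightarrow> bool" where
  "dst (Lf a) = True" | "dst (Nd l r) = (dst l \<and> dst r \<and> lvs l \<inter> lvs r = {})"

primrec clus :: "'a bt \<Rightarrow> 'a set set" where
  "clus (Lf a) = {{a}}" | "clus (Nd l r) = insert (lvs l \<union> lvs r) (clus l \<union> clus r)"

primrec pos :: "'a bt \<Rightarrow> nat \<Rightarrow> nat set" where
  "pos (Lf a) m = {m}" | "pos (Nd l r) m = insert m (pos l (2 * m) \<union> pos r (2 * m + 1))"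

primrec lpos :: "'a bt \<Rightarrow> nat \<Rightarrow> nat set" where
  "lpos (Lf a) m = {m}" | "lpos (Nd l r) m = lpos l (2 * m) \<union> lpos r (2 * m + 1)"

primrec lbl :: "'a bt \<Rightarrow> nat \<Rightarrow> nat \<Rightarrow> 'a" where
  "lbl (Lf a) m k = a"
| "lbl (Nd l r) m k = (if desc (2 * m) k then lbl l (2 * m) k else lbl r (2 * m + 1) k)"

declare lbl.simps(2)[simp del]

lemma pos_desc: "k \<in> pos T m \<Longrightarrow> desc m k"
proof (induction T arbitrary: m)
  case (Lf a) thus ?case by (simp add: desc_refl)
next
  case (Nd l r)
  thus ?case using desc_trans desc_child desc_refl by (auto intro: desc_trans[OF desc_child(1)[OF desc_refl]] desc_trans[OF desc_child(2)[OF desc_refl]])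
qed

lemma pos_root: "m \<in> pos T m"
  by (cases T) auto

lemma lpos_sub: "lpos T m \<subseteq> pos T m"
  by (induction T arbitrary: m) auto

lemma pos_finite: "finite (pos T m)"
  by (induction T arbitrary: m) auto

lemma desc_2m: "desc (2 * m) k \<Longrightarrow> desc m k"
  using desc_trans[OF desc_child(1)[OF desc_refl]] by blast
lemma desc_2m1: "desc (2 * m + 1) k \<Longrightarrow> desc m k"
  using desc_trans[OF desc_child(2)[OF desc_refl]] by blast

lemma not_desc_root: "m \<ge> 1 \<Longrightarrow> \<not> desc (2 * m) m" "m \<ge> 1 \<Longrightarrow> \<not> desc (2 * m + 1) m"
  using desc_le by fastforce+

lemma pos_parent: "m \<ge> 1 \<Longrightarrow> k \<in> pos T m \<Longrightarrow> k \<noteq> m \<Longrightarrow> k div 2 \<in> pos T m"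
proof (induction T arbitrary: m)
  case (Lf a) thus ?case by simp
next
  case (Nd l r)
  have m2: "2 * m \<ge> 1" "2 * m + 1 \<ge> 1" using Nd.prems(1) by auto
  from Nd.prems(2,3) have "k \<in> pos l (2 * m) \<or> k \<in> pos r (2 * m + 1)" by simp
  thus ?case
  proof
    assume k: "k \<in> pos l (2 * m)"
    show ?thesis
    proof (cases "k = 2 * m")
      case True thus ?thesis by simp
    next
      case False thus ?thesis using Nd.IH(1)[OF m2(1) k] by simp
    qed
  next
    assume k: "k \<in> pos r (2 * m + 1)"
    show ?thesis
    proof (cases "k = 2 * m + 1")
      case True thus ?thesis by simp
    next
      case False thus ?thesis using Nd.IH(2)[OF m2(2) k] by simp
    qed
  qed
qed

lemma lpos_desc: "k \<in> lpos T m \<Longrightarrow> desc m k"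
  using pos_desc lpos_sub by blast

lemma root_not_lpos: "m \<ge> 1 \<Longrightarrow> m \<notin> lpos (Nd l r) m"
  using lpos_desc not_desc_root by fastforce

lemma pos_child: "m \<ge> 1 \<Longrightarrow> k \<in> pos T m \<Longrightarrow>
   (2 * k \<in> pos T m \<longleftrightarrow> k \<notin> lpos T m) \<and> (2 * k + 1 \<in> pos T m \<longleftrightarrow> k \<notin> lpos T m)"
proof (induction T arbitrary: m)
  case (Lf a)
  thus ?case by simp
next
  case (Nd l r)
  have m2: "2 * m \<ge> 1" "2 * m + 1 \<ge> 1" using Nd.prems(1) by auto
  have km: "k \<ge> m" using pos_desc[OF Nd.prems(2)] desc_le by auto
  consider "k = m" | "k \<in> pos l (2 * m)" | "k \<in> pos r (2 * m + 1)" using Nd.prems(2) by auto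
  thus ?case
  proof cases
    case 1
    thus ?thesis using root_not_lpos[OF Nd.prems(1)] pos_root by auto
  next
    case 2
    have dk: "desc (2 * m) k" using pos_desc[OF 2] .
    have d1: "desc (2 * m) (2 * k)" "desc (2 * m) (2 * k + 1)" using desc_child[OF dk] by auto
    have n1: "2 * k \<noteq> m" "2 * k + 1 \<noteq> m" using km Nd.prems(1) by auto
    have n2: "2 * k \<notin> pos r (2 * m + 1)" "2 * k + 1 \<notin> pos r (2 * m + 1)"
      using d1 pos_desc desc_disj[OF Nd.prems(1)] by blast+
    have n3: "k \<notin> lpos r (2 * m + 1)" using dk lpos_desc desc_disj[OF Nd.prems(1)] by blast
    show ?thesis using Nd.IH(1)[OF m2(1) 2] n1 n2 n3 by auto
  next
    case 3
    have dk: "desc (2 * m + 1) k" using pos_desc[OF 3] .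
    have d1: "desc (2 * m + 1) (2 * k)" "desc (2 * m + 1) (2 * k + 1)" using desc_child[OF dk] by auto
    have n1: "2 * k \<noteq> m" "2 * k + 1 \<noteq> m" using km Nd.prems(1) by auto
    have n2: "2 * k \<notin> pos l (2 * m)" "2 * k + 1 \<notin> pos l (2 * m)"
      using d1 pos_desc desc_disj[OF Nd.prems(1)] by blast+
    have n3: "k \<notin> lpos l (2 * m)" using dk lpos_desc desc_disj[OF Nd.prems(1)] by blast
    show ?thesis using Nd.IH(2)[OF m2(2) 3] n1 n2 n3 by auto
  qed
qed

lemma lbl_img: "m \<ge> 1 \<Longrightarrow> lbl T m ` lpos T m = lvs T"
proof (induction T arbitrary: m)
  case (Lf a) thus ?case by simp
next
  case (Nd l r)
  have m2: "2 * m \<ge> 1" "2 * m + 1 \<ge> 1" using Nd.prems(1) by auto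
  have a: "lbl (Nd l r) m ` lpos l (2 * m) = lbl l (2 * m) ` lpos l (2 * m)"
    using lpos_desc by (intro image_cong) (auto simp: lbl.simps)
  have b: "lbl (Nd l r) m ` lpos r (2 * m + 1) = lbl r (2 * m + 1) ` lpos r (2 * m + 1)"
    using lpos_desc desc_disj[OF Nd.prems(1)] by (intro image_cong) (auto simp: lbl.simps)
  have "lbl (Nd l r) m ` lpos (Nd l r) m = lbl (Nd l r) m ` lpos l (2 * m) \<union> lbl (Nd l r) m ` lpos r (2 * m + 1)"
    by (simp only: lpos.simps image_Un)
  also have "\<dots> = lvs l \<union> lvs r" unfolding a b using Nd.IH[OF m2(1)] Nd.IH[OF m2(2)] by simp
  finally show ?case by simp
qed

lemma lbl_inj: "m \<ge> 1 \<Longrightarrow> dst T \<Longrightarrow> inj_on (lbl T m) (lpos T m)"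
proof (induction T arbitrary: m)
  case (Lf a) thus ?case by simp
next
  case (Nd l r)
  have m2: "2 * m \<ge> 1" "2 * m + 1 \<ge> 1" using Nd.prems(1) by auto
  have il: "inj_on (lbl l (2 * m)) (lpos l (2 * m))" using Nd.IH(1)[OF m2(1)] Nd.prems(2) by simp
  have ir: "inj_on (lbl r (2 * m + 1)) (lpos r (2 * m + 1))" using Nd.IH(2)[OF m2(2)] Nd.prems(2) by simp
  have disj: "lvs l \<inter> lvs r = {}" using Nd.prems(2) by simp
  have L: "lbl (Nd l r) m k = lbl l (2 * m) k" if "k \<in> lpos l (2 * m)" for k
    using that lpos_desc by (auto simp: lbl.simps)
  have R: "lbl (Nd l r) m k = lbl r (2 * m + 1) k" if "k \<in> lpos r (2 * m + 1)" for k
    using that lpos_desc desc_disj[OF Nd.prems(1)] by (auto simp: lbl.simps)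
  have iL: "lbl l (2 * m) k \<in> lvs l" if "k \<in> lpos l (2 * m)" for k
    using lbl_img[OF m2(1), of l] that by auto
  have iR: "lbl r (2 * m + 1) k \<in> lvs r" if "k \<in> lpos r (2 * m + 1)" for k
    using lbl_img[OF m2(2), of r] that by auto
  show ?case
  proof (rule inj_onI)
    fix x y assume x: "x \<in> lpos (Nd l r) m" and y: "y \<in> lpos (Nd l r) m"
      and e: "lbl (Nd l r) m x = lbl (Nd l r) m y"
    from x y consider "x \<in> lpos l (2 * m)" "y \<in> lpos l (2 * m)" | "x \<in> lpos l (2 * m)" "y \<in> lpos r (2 * m + 1)"
      | "x \<in> lpos r (2 * m + 1)" "y \<in> lpos l (2 * m)" | "x \<in> lpos r (2 * m + 1)" "y \<in> lpos r (2 * m + 1)" by auto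
    thus "x = y"
    proof cases
      case 1 thus ?thesis using e L il inj_onD by metis
    next
      case 2 thus ?thesis using e L R iL iR disj by (metis disjoint_iff)
    next
      case 3 thus ?thesis using e L R iL iR disj by (metis disjoint_iff)
    next
      case 4 thus ?thesis using e R ir inj_onD by metis
    qed
  qed
qed

lemma clus_cut: "m \<ge> 1 \<Longrightarrow> k \<in> pos T m \<Longrightarrow> lbl T m ` (lpos T m \<inter> {u. desc k u}) \<in> clus T"
proof (induction T arbitrary: m)
  case (Lf a)
  hence "lpos (Lf a) m \<inter> {u. desc k u} = {m}" using desc_refl by auto
  thus ?case by simp
next
  case (Nd l r)
  have m2: "2 * m \<ge> 1" "2 * m + 1 \<ge> 1" using Nd.prems(1) by auto
  consider "k = m" | "k \<in> pos l (2 * m)" | "k \<in> pos r (2 * m + 1)" using Nd.prems(2) by auto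
  thus ?case
  proof cases
    case 1
    have "lpos (Nd l r) m \<inter> {u. desc k u} = lpos (Nd l r) m" using 1 lpos_desc by blast
    hence "lbl (Nd l r) m ` (lpos (Nd l r) m \<inter> {u. desc k u}) = lvs (Nd l r)"
      using lbl_img[OF Nd.prems(1), of "Nd l r"] by simp
    thus ?thesis by simp
  next
    case 2
    have dk: "desc (2 * m) k" using pos_desc[OF 2] .
    have "lpos (Nd l r) m \<inter> {u. desc k u} = lpos l (2 * m) \<inter> {u. desc k u}"
      using dk desc_trans lpos_desc desc_disj[OF Nd.prems(1)] by fastforce
    moreover have "lbl (Nd l r) m ` (lpos l (2 * m) \<inter> {u. desc k u}) = lbl l (2 * m) ` (lpos l (2 * m) \<inter> {u. desc k u})"
      using lpos_desc by (intro image_cong) (auto simp: lbl.simps)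
    ultimately show ?thesis using Nd.IH(1)[OF m2(1) 2] by simp
  next
    case 3
    have dk: "desc (2 * m + 1) k" using pos_desc[OF 3] .
    have "lpos (Nd l r) m \<inter> {u. desc k u} = lpos r (2 * m + 1) \<inter> {u. desc k u}"
      using dk desc_trans lpos_desc desc_disj[OF Nd.prems(1)] by fastforce
    moreover have "lbl (Nd l r) m ` (lpos r (2 * m + 1) \<inter> {u. desc k u}) = lbl r (2 * m + 1) ` (lpos r (2 * m + 1) \<inter> {u. desc k u})"
      using lpos_desc desc_disj[OF Nd.prems(1)] by (intro image_cong) (auto simp: lbl.simps)
    ultimately show ?thesis using Nd.IH(2)[OF m2(2) 3] by simp
  qed
qed


definition hN :: "'a bt \<Rightarrow> nat set" where "hN T = pos T 1 - {1}"
definition hE :: "'a bt \<Rightarrow> (nat \<times> nat) set" where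
  "hE T = {(k div 2, k) | k. k \<in> hN T \<and> 4 \<le> k} \<union> {(k, k div 2) | k. k \<in> hN T \<and> 4 \<le> k} \<union> {(2, 3), (3, 2)}"
definition oth :: "nat \<Rightarrow> nat" where "oth k = (if 4 \<le> k then k div 2 else 5 - k)"

declare pos.simps(2)[simp del] lpos.simps(2)[simp del]

lemma not_desc_2_3: "\<not> desc 2 3"
proof
  assume "desc 2 3"
  from desc_le2[OF this] show False by simp
qed

context
  fixes l r :: "'a bt"
begin

abbreviation "TT \<equiv> Nd l r"
abbreviation "NN \<equiv> hN TT"
abbreviation "EE \<equiv> hE TT"
abbreviation "LL \<equiv> lpos TT 1"

lemma NN_eq: "NN = pos l 2 \<union> pos r 3"
proof -
  have "1 \<notin> pos l 2" using pos_desc[of 1 l 2] desc_le by fastforce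
  moreover have "1 \<notin> pos r 3" using pos_desc[of 1 r 3] desc_le by fastforce
  ultimately show ?thesis unfolding hN_def pos.simps(2) by auto
qed

lemma NN_ge2: "k \<in> NN \<Longrightarrow> 2 \<le> k"
  unfolding NN_eq using pos_desc desc_le by fastforce

lemma NN_23: "2 \<in> NN" "3 \<in> NN"
  unfolding NN_eq using pos_root[of 2 l] pos_root[of 3 r] by auto

lemma NN_pos: "k \<in> NN \<Longrightarrow> k \<in> pos TT 1"
  unfolding hN_def by simp

lemma NN_parent: "k \<in> NN \<Longrightarrow> 4 \<le> k \<Longrightarrow> k div 2 \<in> NN"
proof -
  assume k: "k \<in> NN" "4 \<le> k"
  have "k div 2 \<in> pos TT 1" by (rule pos_parent[OF _ NN_pos[OF k(1)]]) (use k(2) in auto)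
  moreover have "k div 2 \<noteq> 1" using k(2) by auto
  ultimately show ?thesis unfolding hN_def by blast
qed

lemma NN_child: "k \<in> NN \<Longrightarrow> (2 * k \<in> NN \<longleftrightarrow> k \<notin> LL) \<and> (2 * k + 1 \<in> NN \<longleftrightarrow> k \<notin> LL)"
proof -
  assume k: "k \<in> NN"
  have "(2 * k \<in> pos TT 1 \<longleftrightarrow> k \<notin> LL) \<and> (2 * k + 1 \<in> pos TT 1 \<longleftrightarrow> k \<notin> LL)"
    using pos_child[of 1 k TT] NN_pos[OF k] by simp
  moreover have "2 * k \<noteq> 1" "2 * k + 1 \<noteq> 1" using NN_ge2[OF k] by auto
  ultimately show ?thesis unfolding hN_def by simp
qed

lemma LL_NN: "LL \<subseteq> NN"
  unfolding hN_def using lpos_sub[of TT 1] root_not_lpos[of 1 l r] by blast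

lemma EE_iff: "(x, y) \<in> EE \<longleftrightarrow> (y \<in> NN \<and> 4 \<le> y \<and> x = y div 2) \<or> (x \<in> NN \<and> 4 \<le> x \<and> y = x div 2)
   \<or> (x = 2 \<and> y = 3) \<or> (x = 3 \<and> y = 2)"
  unfolding hE_def by auto

lemma EE_sub: "EE \<subseteq> NN \<times> NN"
  using NN_parent NN_23 unfolding EE_iff[abs_def] by (auto simp: hE_def)

lemma EE_sym: "sym EE"
  unfolding sym_def EE_iff by auto

lemma EE_irr: "(x, x) \<notin> EE"
  unfolding EE_iff by auto

lemma oth_edge: "b \<in> NN \<Longrightarrow> (b, oth b) \<in> EE"
proof -
  assume b: "b \<in> NN"
  have "2 \<le> b" using NN_ge2[OF b] .
  thus ?thesis unfolding EE_iff oth_def using b by (cases "4 \<le> b") auto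
qed

lemma edge_form: "(x, y) \<in> EE \<Longrightarrow> y = oth x \<or> x = oth y"
  unfolding EE_iff oth_def by auto

lemma oth_not_desc: "b \<in> NN \<Longrightarrow> \<not> desc b (oth b)"
proof -
  assume b: "b \<in> NN"
  have b2: "2 \<le> b" using NN_ge2[OF b] .
  show ?thesis
  proof (cases "4 \<le> b")
    case True thus ?thesis using desc_le[of b "b div 2"] unfolding oth_def by auto
  next
    case False
    hence "b = 2 \<or> b = 3" using b2 by auto
    thus ?thesis unfolding oth_def using not_desc_2_3 desc_le[of 3 2] by auto
  qed
qed

lemma closure_step:
  assumes b: "b \<in> NN" and u: "desc b u" and e: "(u, w) \<in> EE - ed b (oth b)"
  shows "desc b w"
proof -
  have b2: "2 \<le> b" using NN_ge2[OF b] .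
  have uw: "(u, w) \<in> EE" "(u, w) \<noteq> (b, oth b)" "(u, w) \<noteq> (oth b, b)" using e by auto
  from uw(1) consider (dn) "4 \<le> w" "u = w div 2" | (up) "4 \<le> u" "w = u div 2" | (a) "u = 2" "w = 3" | (c) "u = 3" "w = 2"
    unfolding EE_iff by auto
  thus ?thesis
  proof cases
    case dn
    have "w = 2 * u \<or> w = 2 * u + 1" using dn(2) by auto
    thus ?thesis using desc_child[OF u] by auto
  next
    case up
    show ?thesis
    proof (cases "u = b")
      case True
      hence "w = oth b" using up unfolding oth_def by auto
      thus ?thesis using uw(2) True by simp
    next
      case False thus ?thesis using desc_parent[OF u] up(2) by simp
    qed
  next
    case a
    have "b \<le> 2" using desc_le[OF u] a(1) by simp
    hence "b = 2" using b2 by simp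
    thus ?thesis using uw(2) a unfolding oth_def by simp
  next
    case c
    have "b \<le> 3" using desc_le[OF u] c(1) by simp
    hence "b = 2 \<or> b = 3" using b2 by auto
    thus ?thesis
    proof
      assume "b = 2" thus ?thesis using u c(1) not_desc_2_3 by simp
    next
      assume "b = 3" thus ?thesis using uw(2) c unfolding oth_def by simp
    qed
  qed
qed

lemma closure:
  assumes b: "b \<in> NN" and p: "(b, w) \<in> (EE - ed b (oth b))\<^sup>*"
  shows "desc b w"
  using p
proof (induction rule: rtrancl_induct)
  case base thus ?case by (rule desc_refl)
next
  case (step u w) thus ?case using closure_step[OF b] by blast
qed

lemma reach:
  assumes b: "b \<in> NN"
  shows "u \<in> NN \<Longrightarrow> desc b u \<Longrightarrow> (b, u) \<in> (EE - ed b (oth b))\<^sup>*"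
proof (induction u rule: less_induct)
  case (less u)
  show ?case
  proof (cases "u = b")
    case True thus ?thesis by simp
  next
    case False
    have b2: "2 \<le> b" using NN_ge2[OF b] .
    have u4: "4 \<le> u" "b < u" using desc_le2[OF less.prems(2) False] b2 by auto
    define p where "p = u div 2"
    have pd: "desc b p" unfolding p_def using desc_parent[OF less.prems(2) False] .
    have pN: "p \<in> NN" unfolding p_def using NN_parent[OF less.prems(1) u4(1)] .
    have pl: "p < u" unfolding p_def using u4 by simp
    have IH: "(b, p) \<in> (EE - ed b (oth b))\<^sup>*" using less.IH[OF pl pN pd] .
    have "(p, u) \<in> EE" unfolding EE_iff p_def using less.prems(1) u4 by auto
    moreover have "u \<noteq> oth b" using u4 b2 unfolding oth_def by auto
    ultimately have "(p, u) \<in> EE - ed b (oth b)" using False by auto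
    show ?thesis by (rule rtrancl_into_rtrancl[OF IH \<open>(p, u) \<in> EE - ed b (oth b)\<close>])
  qed
qed

lemma conn2: "k \<in> NN \<Longrightarrow> (k, 2) \<in> EE\<^sup>*"
proof (induction k rule: less_induct)
  case (less k)
  have k2: "2 \<le> k" using NN_ge2[OF less.prems] .
  consider "k = 2" | "k = 3" | "4 \<le> k" using k2 by linarith
  thus ?case
  proof cases
    case 1 thus ?thesis by simp
  next
    case 2
    have "(3, 2) \<in> EE" unfolding EE_iff by simp
    thus ?thesis using 2 by simp
  next
    case 3
    have "(k, k div 2) \<in> EE" unfolding EE_iff using less.prems 3 by auto
    moreover have "(k div 2, 2) \<in> EE\<^sup>*" using less.IH[of "k div 2"] NN_parent[OF less.prems 3] 3 by simp
    ultimately show ?thesis by (rule converse_rtrancl_into_rtrancl)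
  qed
qed

lemma hE_tree: "is_tree NN EE"
  unfolding is_tree_def
proof (intro conjI)
  show "finite NN" unfolding hN_def using pos_finite[of TT 1] by simp
  show "NN \<noteq> {}" using NN_23 by auto
  show "EE \<subseteq> NN \<times> NN" by (rule EE_sub)
  show "sym EE" by (rule EE_sym)
  show "\<forall>x. (x, x) \<notin> EE" using EE_irr by auto
  show "connected_in EE NN" unfolding connected_in_def
  proof (intro ballI)
    fix x y assume x: "x \<in> NN" and y: "y \<in> NN"
    have "EE \<inter> NN \<times> NN = EE" using EE_sub by auto
    moreover have "(x, 2) \<in> EE\<^sup>*" using conn2[OF x] .
    moreover have "(2, y) \<in> EE\<^sup>*" using sym_rtrancl_sym[OF EE_sym conn2[OF y]] .
    ultimately show "(x, y) \<in> (EE \<inter> NN \<times> NN)\<^sup>*" by simp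
  qed
  show "\<forall>(x, y)\<in>EE. (x, y) \<notin> (EE - ed x y)\<^sup>*"
  proof (intro ballI, clarify)
    fix x y assume e: "(x, y) \<in> EE" and p: "(x, y) \<in> (EE - ed x y)\<^sup>*"
    have xN: "x \<in> NN" and yN: "y \<in> NN" using e EE_sub by auto
    from edge_form[OF e] show False
    proof
      assume "y = oth x"
      thus False using closure[OF xN] p oth_not_desc[OF xN] by auto
    next
      assume o: "x = oth y"
      have s: "sym (EE - ed x y)" using sym_minus_ed[OF EE_sym] .
      have "(y, x) \<in> (EE - ed x y)\<^sup>*" using sym_rtrancl_sym[OF s p] .
      moreover have "ed x y = ed y (oth y)" using o by auto
      ultimately have "desc y x" using closure[OF yN] by simp
      thus False using oth_not_desc[OF yN] o by simp
    qed
  qed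
qed

lemma side_desc: "b \<in> NN \<Longrightarrow> tree_side NN EE b (oth b) = NN \<inter> {u. desc b u}"
proof -
  assume b: "b \<in> NN"
  show ?thesis
  proof
    show "tree_side NN EE b (oth b) \<subseteq> NN \<inter> {u. desc b u}"
      using closure[OF b] unfolding tree_side_def by auto
    show "NN \<inter> {u. desc b u} \<subseteq> tree_side NN EE b (oth b)"
      using reach[OF b] unfolding tree_side_def by auto
  qed
qed

lemma nbrs_eq: "t \<in> NN \<Longrightarrow> {u. (t, u) \<in> EE} = insert (oth t) (if t \<in> LL then {} else {2 * t, 2 * t + 1})"
proof -
  assume t: "t \<in> NN"
  have t2: "2 \<le> t" using NN_ge2[OF t] .
  show ?thesis
  proof
    show "{u. (t, u) \<in> EE} \<subseteq> insert (oth t) (if t \<in> LL then {} else {2 * t, 2 * t + 1})"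
    proof
      fix u assume "u \<in> {u. (t, u) \<in> EE}"
      hence e: "(t, u) \<in> EE" by simp
      have uN: "u \<in> NN" using e EE_sub by auto
      from e consider (dn) "4 \<le> u" "t = u div 2" | (up) "4 \<le> t" "u = t div 2" | (a) "t = 2" "u = 3" | (c) "t = 3" "u = 2"
        unfolding EE_iff by auto
      thus "u \<in> insert (oth t) (if t \<in> LL then {} else {2 * t, 2 * t + 1})"
      proof cases
        case dn
        have "u = 2 * t \<or> u = 2 * t + 1" using dn(2) by auto
        moreover hence "t \<notin> LL" using NN_child[OF t] uN by auto
        ultimately show ?thesis by auto
      qed (auto simp: oth_def)
    qed
    show "insert (oth t) (if t \<in> LL then {} else {2 * t, 2 * t + 1}) \<subseteq> {u. (t, u) \<in> EE}"
    proof
      fix u assume u: "u \<in> insert (oth t) (if t \<in> LL then {} else {2 * t, 2 * t + 1})"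
      show "u \<in> {u. (t, u) \<in> EE}"
      proof (cases "u = oth t")
        case True thus ?thesis using oth_edge[OF t] by simp
      next
        case False
        hence "t \<notin> LL" "u = 2 * t \<or> u = 2 * t + 1" using u by (auto split: if_splits)
        moreover hence "u \<in> NN" using NN_child[OF t] by auto
        ultimately show ?thesis unfolding EE_iff using t2 by auto
      qed
    qed
  qed
qed

lemma deg_eq: "t \<in> NN \<Longrightarrow> tree_degree EE t = (if t \<in> LL then 1 else 3)"
proof -
  assume t: "t \<in> NN"
  have t2: "2 \<le> t" using NN_ge2[OF t] .
  have o: "oth t \<noteq> 2 * t" "oth t \<noteq> 2 * t + 1" using t2 unfolding oth_def by auto
  show ?thesis unfolding tree_degree_def nbrs_eq[OF t] using o by auto
qed

lemma leaves_eq: "tree_leaves NN EE = LL"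
  unfolding tree_leaves_def using deg_eq LL_NN by (auto split: if_splits)

lemma other_side: "(x, y) \<in> EE \<Longrightarrow> tree_side NN EE y x = NN - tree_side NN EE x y"
proof -
  assume e: "(x, y) \<in> EE"
  have "\<forall>z\<in>NN. z \<in> tree_side NN EE x y \<or> z \<in> tree_side NN EE y x"
    using side_cover[OF hE_tree e] by blast
  moreover have "tree_side NN EE x y \<inter> tree_side NN EE y x = {}" using side_disj[OF hE_tree e] .
  moreover have "tree_side NN EE y x \<subseteq> NN" using side_sub[OF hE_tree] .
  ultimately show ?thesis by blast
qed

end

lemma rd_of_bt:
  assumes d: "dst T" and lv: "lvs T = verts G"
    and w: "\<forall>X\<in>clus T. cutrank G X \<le> w \<and> cutrank G (verts G - X) \<le> w"
  shows "\<exists>N E f. rank_decomposition G N E f \<and>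
     (\<forall>(s, t)\<in>E. cutrank G (f ` (tree_leaves N E \<inter> tree_side N E s t)) \<le> w)"
proof (cases T)
  case (Lf a)
  have tr: "is_tree {1} {}" unfolding is_tree_def connected_in_def by auto
  have lv1: "tree_leaves {1} {} = {1}" unfolding tree_leaves_def tree_degree_def by auto
  have "bij_betw (\<lambda>_. a) {1::nat} (verts G)" using lv Lf unfolding bij_betw_def by auto
  hence "rank_decomposition G {1} {} (\<lambda>_. a)" unfolding rank_decomposition_def using tr lv1 by auto
  thus ?thesis by blast
next
  case (Nd l r)
  define f where "f = lbl T 1"
  have bij: "bij_betw f (tree_leaves (hN (Nd l r)) (hE (Nd l r))) (verts G)"
    unfolding leaves_eq bij_betw_def f_def Nd
    using lbl_inj[of 1 "Nd l r"] lbl_img[of 1 "Nd l r"] d lv Nd by simp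
  have "rank_decomposition G (hN (Nd l r)) (hE (Nd l r)) f"
    unfolding rank_decomposition_def
  proof (intro conjI)
    show "is_tree (hN (Nd l r)) (hE (Nd l r))" by (rule hE_tree)
    show "\<forall>t\<in>hN (Nd l r) - tree_leaves (hN (Nd l r)) (hE (Nd l r)). tree_degree (hE (Nd l r)) t = 3"
    proof
      fix t assume "t \<in> hN (Nd l r) - tree_leaves (hN (Nd l r)) (hE (Nd l r))"
      hence "t \<in> hN (Nd l r)" "t \<notin> lpos (Nd l r) 1" unfolding leaves_eq by auto
      thus "tree_degree (hE (Nd l r)) t = 3" using deg_eq[of t l r] by simp
    qed
    show "bij_betw f (tree_leaves (hN (Nd l r)) (hE (Nd l r))) (verts G)" by (rule bij)
  qed
  moreover have "\<forall>(s, t)\<in>hE (Nd l r). cutrank G (f ` (tree_leaves (hN (Nd l r)) (hE (Nd l r)) \<inter> tree_side (hN (Nd l r)) (hE (Nd l r)) s t)) \<le> w"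
  proof (intro ballI, clarify)
    fix s t assume e: "(s, t) \<in> hE (Nd l r)"
    have sN: "s \<in> hN (Nd l r)" and tN: "t \<in> hN (Nd l r)" using e EE_sub by auto
    have inj: "inj_on f (lpos (Nd l r) 1)" unfolding f_def using lbl_inj[of 1 "Nd l r"] d Nd by simp
    have img: "f ` lpos (Nd l r) 1 = verts G" unfolding f_def using lbl_img[of 1 "Nd l r"] lv Nd by simp
    have cl: "f ` (lpos (Nd l r) 1 \<inter> {u. desc b u}) \<in> clus T" if b: "b \<in> hN (Nd l r)" for b
      unfolding f_def using clus_cut[of 1 b T] b Nd unfolding hN_def by simp
    have side1: "f ` (lpos (Nd l r) 1 \<inter> tree_side (hN (Nd l r)) (hE (Nd l r)) b (oth b)) = f ` (lpos (Nd l r) 1 \<inter> {u. desc b u})"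
      if b: "b \<in> hN (Nd l r)" for b
      using side_desc[OF b] LL_NN by (metis Int_assoc inf.absorb_iff1)
    from edge_form[OF e] show "cutrank G (f ` (tree_leaves (hN (Nd l r)) (hE (Nd l r)) \<inter> tree_side (hN (Nd l r)) (hE (Nd l r)) s t)) \<le> w"
    proof
      assume "t = oth s"
      thus ?thesis using side1[OF sN] cl[OF sN] w leaves_eq[of l r] by simp
    next
      assume o: "s = oth t"
      have e': "(t, s) \<in> hE (Nd l r)" using e EE_sym unfolding sym_def by blast
      have "tree_side (hN (Nd l r)) (hE (Nd l r)) s t = hN (Nd l r) - tree_side (hN (Nd l r)) (hE (Nd l r)) t s"
        using other_side[OF e'] .
      hence "lpos (Nd l r) 1 \<inter> tree_side (hN (Nd l r)) (hE (Nd l r)) s t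
          = lpos (Nd l r) 1 - (lpos (Nd l r) 1 \<inter> tree_side (hN (Nd l r)) (hE (Nd l r)) t s)"
        using LL_NN by blast
      hence "f ` (lpos (Nd l r) 1 \<inter> tree_side (hN (Nd l r)) (hE (Nd l r)) s t)
          = verts G - f ` (lpos (Nd l r) 1 \<inter> tree_side (hN (Nd l r)) (hE (Nd l r)) t s)"
        using inj img by (simp add: inj_on_image_set_diff)
      also have "\<dots> = verts G - f ` (lpos (Nd l r) 1 \<inter> {u. desc t u})" using side1[OF tN] o by simp
      finally show ?thesis using cl[OF tN] w leaves_eq[of l r] by simp
    qed
  qed
  ultimately show ?thesis by blast
qed


lemma clus_sub: "X \<in> clus T \<Longrightarrow> X \<subseteq> lvs T"
  by (induction T) auto

lemma combine_blocks:
  assumes "finite F" "F \<noteq> {}"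
  shows "(\<forall>B\<in>F. \<exists>T. lvs T = B \<and> dst T \<and> (\<forall>X\<in>clus T. Q X)) \<Longrightarrow>
    (\<forall>B1\<in>F. \<forall>B2\<in>F. B1 \<noteq> B2 \<longrightarrow> B1 \<inter> B2 = {}) \<Longrightarrow>
    (\<forall>F'. F' \<subseteq> F \<longrightarrow> F' \<noteq> {} \<longrightarrow> Q (\<Union>F')) \<Longrightarrow>
    \<exists>T. lvs T = \<Union>F \<and> dst T \<and> (\<forall>X\<in>clus T. Q X)"
  using assms
proof (induction F rule: finite_ne_induct)
  case (singleton B)
  then obtain T where "lvs T = B" "dst T" "\<forall>X\<in>clus T. Q X" by auto
  thus ?case by (intro exI[of _ T]) simp
next
  case (insert B F)
  have p1: "\<forall>B\<in>F. \<exists>T. lvs T = B \<and> dst T \<and> (\<forall>X\<in>clus T. Q X)" using insert.prems(1) by simp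
  have p2: "\<forall>B1\<in>F. \<forall>B2\<in>F. B1 \<noteq> B2 \<longrightarrow> B1 \<inter> B2 = {}" using insert.prems(2) by simp
  have p3: "\<forall>F'. F' \<subseteq> F \<longrightarrow> F' \<noteq> {} \<longrightarrow> Q (\<Union>F')" using insert.prems(3) by auto
  obtain T1 where T1: "lvs T1 = \<Union>F" "dst T1" "\<forall>X\<in>clus T1. Q X"
    using insert.IH[OF p1 p2 p3] by blast
  obtain T2 where T2: "lvs T2 = B" "dst T2" "\<forall>X\<in>clus T2. Q X"
    using insert.prems(1) by blast
  have disj: "\<Union>F \<inter> B = {}"
  proof -
    have "\<forall>B'\<in>F. B' \<inter> B = {}"
    proof
      fix B' assume "B' \<in> F"
      hence "B' \<noteq> B" using insert.hyps(3) by auto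
      thus "B' \<inter> B = {}" using insert.prems(2) \<open>B' \<in> F\<close> by simp
    qed
    thus ?thesis by blast
  qed
  have q: "Q (\<Union>(insert B F))" using insert.prems(3)[rule_format, of "insert B F"] by simp
  have "lvs (Nd T1 T2) = \<Union>(insert B F)" using T1 T2 by auto
  moreover have "dst (Nd T1 T2)" using T1 T2 disj by simp
  moreover have "\<forall>X\<in>clus (Nd T1 T2). Q X"
  proof -
    have "lvs T1 \<union> lvs T2 = \<Union>(insert B F)" using T1 T2 by auto
    thus ?thesis using T1(3) T2(3) q by (simp add: ball_Un)
  qed
  ultimately show ?case by blast
qed

lemma combine_singles:
  assumes "finite S"
  shows "(A = {} \<or> (\<exists>T0. lvs T0 = A \<and> dst T0 \<and> (\<forall>X\<in>clus T0. Q X))) \<Longrightarrow> A \<inter> S = {} \<Longrightarrow>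
    (\<forall>s\<in>S. Q {s}) \<Longrightarrow> (\<forall>S'. S' \<subseteq> S \<longrightarrow> S' \<noteq> {} \<longrightarrow> Q (A \<union> S')) \<Longrightarrow> A \<union> S \<noteq> {} \<Longrightarrow>
    \<exists>T. lvs T = A \<union> S \<and> dst T \<and> (\<forall>X\<in>clus T. Q X)"
  using assms
proof (induction S rule: finite_induct)
  case empty
  then obtain T0 where "lvs T0 = A" "dst T0" "\<forall>X\<in>clus T0. Q X" by auto
  thus ?case by (intro exI[of _ T0]) simp
next
  case (insert s S)
  show ?case
  proof (cases "A \<union> S = {}")
    case True
    hence "A \<union> insert s S = {s}" by auto
    moreover have "Q {s}" using insert.prems(3) by simp
    ultimately show ?thesis by (intro exI[of _ "Lf s"]) auto
  next
    case False
    have p2: "A \<inter> S = {}" using insert.prems(2) by auto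
    have p3: "\<forall>s\<in>S. Q {s}" using insert.prems(3) by simp
    have p4: "\<forall>S'. S' \<subseteq> S \<longrightarrow> S' \<noteq> {} \<longrightarrow> Q (A \<union> S')" using insert.prems(4) by auto
    obtain T' where T': "lvs T' = A \<union> S" "dst T'" "\<forall>X\<in>clus T'. Q X"
      using insert.IH[OF insert.prems(1) p2 p3 p4 False] by blast
    have sn: "s \<notin> A \<union> S" using insert.prems(2) insert.hyps(2) by auto
    have q1: "Q (A \<union> insert s S)" using insert.prems(4)[rule_format, of "insert s S"] by simp
    have q2: "Q {s}" using insert.prems(3) by simp
    have "lvs (Nd T' (Lf s)) = A \<union> insert s S" using T' by auto
    moreover have "dst (Nd T' (Lf s))" using T' sn by simp
    moreover have "\<forall>X\<in>clus (Nd T' (Lf s)). Q X"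
    proof -
      have "lvs T' \<union> lvs (Lf s) = A \<union> insert s S" using T' by auto
      thus ?thesis using T'(3) q1 q2 by (simp add: ball_Un)
    qed
    ultimately show ?thesis by blast
  qed
qed

context
  fixes G :: "'a graph" and N E bag
  assumes G: "finite_graph G" and td: "tree_decomposition G N E bag"
begin

lemma tdN: "is_tree N E" using td unfolding tree_decomposition_def by simp
lemma td_bagV: "t \<in> N \<Longrightarrow> bag t \<subseteq> verts G" using td unfolding tree_decomposition_def by simp
lemma td_cov: "v \<in> verts G \<Longrightarrow> \<exists>t\<in>N. v \<in> bag t" using td unfolding tree_decomposition_def by simp
lemma td_edge: "adj G u v \<Longrightarrow> \<exists>t\<in>N. u \<in> bag t \<and> v \<in> bag t" using td unfolding tree_decomposition_def by simp
lemma tdg_conn: "v \<in> verts G \<Longrightarrow> connected_in E {t \<in> N. v \<in> bag t}" using td unfolding tree_decomposition_def by simp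

definition Qd :: "'a set \<Rightarrow> bool" where
  "Qd X \<longleftrightarrow> card X = 1 \<or> (\<exists>t\<in>N. \<forall>x\<in>X. \<forall>y. adj G x y \<and> y \<notin> X \<longrightarrow> y \<in> bag t)"

definition VM :: "nat \<Rightarrow> nat \<Rightarrow> 'a set" where
  "VM c p = {v \<in> verts G. {t \<in> N. v \<in> bag t} \<subseteq> tree_side N E c p}"

lemma adj_block:
  assumes e: "(c, c') \<in> E" and x: "x \<in> VM c' c" and a: "adj G x y" and y: "y \<notin> bag c"
  shows "y \<in> VM c' c"
proof -
  obtain t0 where t0: "t0 \<in> N" "x \<in> bag t0" "y \<in> bag t0" using td_edge[OF a] by blast
  have t0s: "t0 \<in> tree_side N E c' c" using x t0 unfolding VM_def by auto
  have yV: "y \<in> verts G" using fg_adjD[OF G a] by simp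
  have "c \<notin> {t \<in> N. y \<in> bag t}" using y by simp
  hence "{t \<in> N. y \<in> bag t} \<subseteq> tree_side N E c' c"
    using conn_in_side[OF tdN e tdg_conn[OF yV]] t0 t0s by blast
  thus ?thesis unfolding VM_def using yV by simp
qed

lemma adj_top:
  assumes c: "c \<in> N" and x: "x \<in> VM c p" and a: "adj G x y" and y: "y \<notin> bag c"
  shows "\<exists>c'. (c, c') \<in> E \<and> c' \<noteq> p \<and> y \<in> VM c' c"
proof -
  obtain t0 where t0: "t0 \<in> N" "x \<in> bag t0" "y \<in> bag t0" using td_edge[OF a] by blast
  have t0s: "t0 \<in> tree_side N E c p" using x t0 unfolding VM_def by auto
  have "t0 \<noteq> c" using t0(3) y by auto
  then obtain c' where c': "(c, c') \<in> E" "c' \<noteq> p" "t0 \<in> tree_side N E c' c"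
    using side_child[OF tdN c t0s] by blast
  have yV: "y \<in> verts G" using fg_adjD[OF G a] by simp
  have "c \<notin> {t \<in> N. y \<in> bag t}" using y by simp
  hence "{t \<in> N. y \<in> bag t} \<subseteq> tree_side N E c' c"
    using conn_in_side[OF tdN c'(1) tdg_conn[OF yV]] t0 c'(3) by blast
  thus ?thesis unfolding VM_def using yV c' by blast
qed

lemma main_ind:
  "\<forall>c p. card (tree_side N E c p) = n \<longrightarrow> c \<in> N \<longrightarrow> (p = c \<or> (c, p) \<in> E) \<longrightarrow> VM c p \<noteq> {} \<longrightarrow>
     (\<exists>T. lvs T = VM c p \<and> dst T \<and> (\<forall>X\<in>clus T. Qd X))"
proof (induction n rule: less_induct)
  case (less n)
  show ?case
  proof (intro allI impI)
    fix c p assume n: "card (tree_side N E c p) = n" and c: "c \<in> N" and p: "p = c \<or> (c, p) \<in> E"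
      and ne: "VM c p \<noteq> {}"
    define ch where "ch = {c'. (c, c') \<in> E \<and> c' \<noteq> p}"
    define F where "F = (\<lambda>c'. VM c' c) ` {c' \<in> ch. VM c' c \<noteq> {}}"
    define S where "S = VM c p \<inter> bag c"
    have finN: "finite N" using tr_fin[OF tdN] .
    have finch: "finite ch"
    proof -
      have "ch \<subseteq> N" unfolding ch_def using tr_sub[OF tdN] by auto
      thus ?thesis using finN by (rule finite_subset)
    qed
    have finF: "finite F" unfolding F_def using finch by simp
    have finS: "finite S"
    proof -
      have "S \<subseteq> verts G" unfolding S_def VM_def by auto
      thus ?thesis using fg_finite[OF G] by (rule finite_subset)
    qed
    have chE: "(c, c') \<in> E" "c' \<noteq> p" if "c' \<in> ch" for c' using that unfolding ch_def by auto
    have sub: "tree_side N E c' c \<subseteq> tree_side N E c p - {c}" if "c' \<in> ch" for c'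
      using side_child_sub[OF tdN chE[OF that]] .
    have F1: "VM c' c \<subseteq> VM c p" if "c' \<in> ch" for c' unfolding VM_def using sub[OF that] by auto
    have blocks: "\<exists>T. lvs T = B \<and> dst T \<and> (\<forall>X\<in>clus T. Qd X)" if B: "B \<in> F" for B
    proof -
      obtain c' where c': "c' \<in> ch" "VM c' c \<noteq> {}" "B = VM c' c" using B unfolding F_def by auto
      have fs: "finite (tree_side N E c p)" using side_sub[OF tdN] finN by (rule finite_subset)
      have "c \<in> tree_side N E c p" using side_self[OF tdN c] .
      hence "tree_side N E c' c \<subset> tree_side N E c p" using sub[OF c'(1)] by blast
      hence lt: "card (tree_side N E c' c) < n" using psubset_card_mono[OF fs] n by simp
      have e': "(c', c) \<in> E" using tr_edge_sym[OF tdN chE(1)[OF c'(1)]] .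
      have c'N: "c' \<in> N" using tr_edgeN[OF tdN e'] by simp
      note h0 = less.IH[OF lt, THEN spec[of _ c'], THEN spec[of _ c]]
      have "\<exists>T. lvs T = VM c' c \<and> dst T \<and> (\<forall>X\<in>clus T. Qd X)"
        using mp[OF mp[OF mp[OF mp[OF h0 refl] c'N] disjI2[OF e']] c'(2)] .
      thus ?thesis using c'(3) by simp
    qed
    have disjc: "VM c1 c \<inter> VM c2 c = {}" if "c1 \<in> ch" "c2 \<in> ch" "c1 \<noteq> c2" for c1 c2
    proof (rule ccontr)
      assume "VM c1 c \<inter> VM c2 c \<noteq> {}"
      then obtain v where v: "v \<in> VM c1 c" "v \<in> VM c2 c" by auto
      have vV: "v \<in> verts G" using v unfolding VM_def by auto
      obtain t0 where t0: "t0 \<in> N" "v \<in> bag t0" using td_cov[OF vV] by blast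
      have a1: "t0 \<in> tree_side N E c1 c" "t0 \<in> tree_side N E c2 c" using v t0 unfolding VM_def by auto
      have "tree_side N E c2 c \<subseteq> tree_side N E c c1 - {c}"
        using side_child_sub[OF tdN chE(1)[OF that(2)] that(3)[symmetric]] .
      hence "t0 \<in> tree_side N E c c1" using a1 by auto
      moreover have "tree_side N E c c1 \<inter> tree_side N E c1 c = {}"
        using side_disj[OF tdN chE(1)[OF that(1)]] .
      ultimately show False using a1 by auto
    qed
    have disjF: "\<forall>B1\<in>F. \<forall>B2\<in>F. B1 \<noteq> B2 \<longrightarrow> B1 \<inter> B2 = {}"
    proof (intro ballI impI)
      fix B1 B2 assume "B1 \<in> F" "B2 \<in> F" "B1 \<noteq> B2"
      then obtain c1 c2 where cc: "c1 \<in> ch" "c2 \<in> ch" "B1 = VM c1 c" "B2 = VM c2 c" unfolding F_def by auto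
      hence "c1 \<noteq> c2" using \<open>B1 \<noteq> B2\<close> by auto
      thus "B1 \<inter> B2 = {}" using disjc[OF cc(1,2)] cc(3,4) by simp
    qed
    have F3: "S \<inter> \<Union>F = {}"
    proof (rule ccontr)
      assume "S \<inter> \<Union>F \<noteq> {}"
      then obtain v c' where v: "v \<in> S" "c' \<in> ch" "v \<in> VM c' c" unfolding F_def by auto
      have "c \<in> tree_side N E c' c" using v c unfolding S_def VM_def by auto
      moreover have "(c', c) \<in> E" using tr_edge_sym[OF tdN chE(1)[OF v(2)]] .
      ultimately show False using side_other_not[OF tdN] by blast
    qed
    have F4: "VM c p = \<Union>F \<union> S"
    proof
      show "\<Union>F \<union> S \<subseteq> VM c p" unfolding F_def S_def using F1 by auto
      show "VM c p \<subseteq> \<Union>F \<union> S"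
      proof
        fix v assume v: "v \<in> VM c p"
        show "v \<in> \<Union>F \<union> S"
        proof (cases "v \<in> bag c")
          case True thus ?thesis using v unfolding S_def by auto
        next
          case False
          have vV: "v \<in> verts G" using v unfolding VM_def by auto
          obtain t0 where t0: "t0 \<in> N" "v \<in> bag t0" using td_cov[OF vV] by blast
          have t0s: "t0 \<in> tree_side N E c p" using v t0 unfolding VM_def by auto
          have "t0 \<noteq> c" using t0 False by auto
          then obtain c' where c': "(c, c') \<in> E" "c' \<noteq> p" "t0 \<in> tree_side N E c' c"
            using side_child[OF tdN c t0s] by blast
          have "c \<notin> {t \<in> N. v \<in> bag t}" using False by simp
          hence "{t \<in> N. v \<in> bag t} \<subseteq> tree_side N E c' c"
            using conn_in_side[OF tdN c'(1) tdg_conn[OF vV]] t0 c'(3) by blast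
          hence "v \<in> VM c' c" unfolding VM_def using vV by simp
          moreover have "c' \<in> ch" unfolding ch_def using c' by simp
          ultimately show ?thesis unfolding F_def by blast
        qed
      qed
    qed
    have QF: "Qd (\<Union>F')" if F': "F' \<subseteq> F" "F' \<noteq> {}" for F'
    proof -
      have "\<forall>x\<in>\<Union>F'. \<forall>y. adj G x y \<and> y \<notin> \<Union>F' \<longrightarrow> y \<in> bag c"
      proof (intro ballI allI impI)
        fix x y assume x: "x \<in> \<Union>F'" and a: "adj G x y \<and> y \<notin> \<Union>F'"
        then obtain c' where c': "c' \<in> ch" "VM c' c \<in> F'" "x \<in> VM c' c" using F' unfolding F_def by auto
        show "y \<in> bag c"
        proof (rule ccontr)
          assume "y \<notin> bag c"
          hence "y \<in> VM c' c" using adj_block[OF chE(1)[OF c'(1)] c'(3)] a by blast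
          thus False using a c'(2) by blast
        qed
      qed
      thus ?thesis unfolding Qd_def using c by blast
    qed
    have QS: "Qd (\<Union>F \<union> S')" if S': "S' \<subseteq> S" "S' \<noteq> {}" for S'
    proof -
      have "\<forall>x\<in>\<Union>F \<union> S'. \<forall>y. adj G x y \<and> y \<notin> \<Union>F \<union> S' \<longrightarrow> y \<in> bag c"
      proof (intro ballI allI impI)
        fix x y assume x: "x \<in> \<Union>F \<union> S'" and a: "adj G x y \<and> y \<notin> \<Union>F \<union> S'"
        show "y \<in> bag c"
        proof (rule ccontr)
          assume yb: "y \<notin> bag c"
          from x show False
          proof
            assume "x \<in> \<Union>F"
            then obtain c' where c': "c' \<in> ch" "x \<in> VM c' c" unfolding F_def by auto
            hence "y \<in> VM c' c" using adj_block[OF chE(1)[OF c'(1)] c'(2)] a yb by blast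
            hence "y \<in> \<Union>F" unfolding F_def using c'(1) by blast
            thus False using a by blast
          next
            assume "x \<in> S'"
            hence "x \<in> VM c p" using S' unfolding S_def by auto
            then obtain c' where c': "(c, c') \<in> E" "c' \<noteq> p" "y \<in> VM c' c"
              using adj_top[OF c] a yb by blast
            hence "y \<in> \<Union>F" unfolding F_def ch_def by blast
            thus False using a by blast
          qed
        qed
      qed
      thus ?thesis unfolding Qd_def using c by blast
    qed
    have A: "\<Union>F = {} \<or> (\<exists>T0. lvs T0 = \<Union>F \<and> dst T0 \<and> (\<forall>X\<in>clus T0. Qd X))"
    proof (cases "F = {}")
      case True thus ?thesis by simp
    next
      case False
      have b': "\<forall>B\<in>F. \<exists>T. lvs T = B \<and> dst T \<and> (\<forall>X\<in>clus T. Qd X)" using blocks by blast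
      have q': "\<forall>F'. F' \<subseteq> F \<longrightarrow> F' \<noteq> {} \<longrightarrow> Qd (\<Union>F')" using QF by blast
      have "\<exists>T0. lvs T0 = \<Union>F \<and> dst T0 \<and> (\<forall>X\<in>clus T0. Qd X)"
        by (rule combine_blocks[OF finF False b' disjF q'])
      thus ?thesis by simp
    qed
    have Qs: "\<forall>s\<in>S. Qd {s}" unfolding Qd_def by simp
    have F3': "\<Union>F \<inter> S = {}" using F3 by blast
    have QS': "\<forall>S'. S' \<subseteq> S \<longrightarrow> S' \<noteq> {} \<longrightarrow> Qd (\<Union>F \<union> S')" using QS by blast
    have ne': "\<Union>F \<union> S \<noteq> {}" using ne F4 by simp
    have "\<exists>T. lvs T = \<Union>F \<union> S \<and> dst T \<and> (\<forall>X\<in>clus T. Qd X)"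
      by (rule combine_singles[OF finS A F3' Qs QS' ne'])
    thus "\<exists>T. lvs T = VM c p \<and> dst T \<and> (\<forall>X\<in>clus T. Qd X)" using F4 by simp
  qed
qed

lemma bt_exists:
  assumes ne: "verts G \<noteq> {}"
  shows "\<exists>T. lvs T = verts G \<and> dst T \<and> (\<forall>X\<in>clus T. Qd X)"
proof -
  obtain r where r: "r \<in> N" using tr_ne[OF tdN] by blast
  have "VM r r = verts G"
    unfolding VM_def side_full[OF tdN r] by auto
  moreover note h0 = main_ind[of "card (tree_side N E r r)", THEN spec[of _ r], THEN spec[of _ r]]
  ultimately show ?thesis using mp[OF mp[OF mp[OF mp[OF h0 refl] r] disjI1[OF refl]]] ne by simp
qed

lemma Qd_cut:
  assumes w: "\<forall>t\<in>N. card (cls G (bag t)) \<le> w" and X: "X \<subseteq> verts G" and Q: "Qd X"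
  shows "cutrank G X \<le> max 1 w \<and> cutrank G (verts G - X) \<le> max 1 w"
proof (cases "card X = 1")
  case True
  then obtain x where x: "X = {x}" by (rule card_1_singletonE)
  have "cutrank G X \<le> card {X}"
  proof (rule row_bound[OF G])
    show "finite {X}" by simp
    show "\<forall>x'\<in>X \<inter> verts G. (\<exists>y\<in>verts G - X. adj G x' y) \<longrightarrow> (\<exists>C\<in>{X}. x' \<in> C)"
    proof (intro ballI impI)
      fix x' assume "x' \<in> X \<inter> verts G"
      hence "x' \<in> X" by simp
      thus "\<exists>C\<in>{X}. x' \<in> C" by simp
    qed
    show "\<forall>C\<in>{X}. \<forall>u\<in>C \<inter> X. \<forall>v\<in>C \<inter> X. \<forall>y\<in>verts G - X. adj G u y \<longleftrightarrow> adj G v y"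
    proof (intro ballI)
      fix C u v y assume "C \<in> {X}" "u \<in> C \<inter> X" "v \<in> C \<inter> X"
      hence "u = x" "v = x" using x by auto
      thus "adj G u y \<longleftrightarrow> adj G v y" by simp
    qed
  qed
  moreover have "cutrank G (verts G - X) \<le> card {X}"
  proof (rule col_bound[OF G])
    show "finite {X}" by simp
    show "\<forall>y\<in>verts G - (verts G - X). (\<exists>x'\<in>(verts G - X) \<inter> verts G. adj G x' y) \<longrightarrow> (\<exists>C\<in>{X}. y \<in> C)"
    proof (intro ballI impI)
      fix y assume "y \<in> verts G - (verts G - X)"
      hence "y \<in> X" by simp
      thus "\<exists>C\<in>{X}. y \<in> C" by simp
    qed
    show "\<forall>C\<in>{X}. \<forall>u\<in>C - (verts G - X). \<forall>v\<in>C - (verts G - X). \<forall>x'\<in>(verts G - X) \<inter> verts G. adj G x' u \<longleftrightarrow> adj G x' v"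
    proof (intro ballI)
      fix C u v x' assume a: "C \<in> {X}" "u \<in> C - (verts G - X)" "v \<in> C - (verts G - X)"
      have "C = X" using a(1) by simp
      hence "u \<in> X" "v \<in> X" using a(2,3) by blast+
      hence "u = x" "v = x" using x by simp_all
      thus "adj G x' u \<longleftrightarrow> adj G x' v" by simp
    qed
  qed
  ultimately show ?thesis by (simp add: le_max_iff_disj)
next
  case False
  then obtain t where t: "t \<in> N" "\<forall>x\<in>X. \<forall>y. adj G x y \<and> y \<notin> X \<longrightarrow> y \<in> bag t"
    using Q unfolding Qd_def by blast
  let ?C = "cls G (bag t)"
  have twin: "adj G x u \<longleftrightarrow> adj G x v" if C: "C \<in> ?C" and u: "u \<in> C" and v: "v \<in> C"
    and xu: "x \<noteq> u" and xv: "x \<noteq> v" for C u v x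
  proof -
    have Ce: "C \<in> eq_classes G" using C unfolding cls_def by simp
    have ce: "clique_equiv G u v" using eq_classes_equiv[OF Ce u v] .
    have "adj G u x \<longleftrightarrow> adj G v x" using twin_adj_iff[OF G ce, of x] xu xv by simp
    thus ?thesis using fg_adj_sym[OF G, of u x] fg_adj_sym[OF G, of x u] fg_adj_sym[OF G, of v x] fg_adj_sym[OF G, of x v]
      by blast
  qed
  have cov: "\<exists>C\<in>?C. y \<in> C" if "y \<in> bag t" "y \<in> verts G" for y
    using cls_cover[of y "bag t" G] that by blast
  have c1: "cutrank G X \<le> card ?C"
  proof (rule col_bound[OF G cls_finite[OF G]])
    show "\<forall>y\<in>verts G - X. (\<exists>x\<in>X \<inter> verts G. adj G x y) \<longrightarrow> (\<exists>C\<in>?C. y \<in> C)"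
    proof (intro ballI impI)
      fix y assume y: "y \<in> verts G - X" and "\<exists>x\<in>X \<inter> verts G. adj G x y"
      then obtain x where "x \<in> X" "adj G x y" by blast
      hence "y \<in> bag t" using t(2) y by blast
      thus "\<exists>C\<in>?C. y \<in> C" using cov y by blast
    qed
    show "\<forall>C\<in>?C. \<forall>u\<in>C - X. \<forall>v\<in>C - X. \<forall>x\<in>X \<inter> verts G. adj G x u \<longleftrightarrow> adj G x v"
    proof (intro ballI)
      fix C u v x assume C: "C \<in> ?C" and u: "u \<in> C - X" and v: "v \<in> C - X" and x: "x \<in> X \<inter> verts G"
      have "x \<noteq> u" "x \<noteq> v" using u v x by auto
      thus "adj G x u \<longleftrightarrow> adj G x v" using twin[OF C] u v by blast
    qed
  qed
  have c2: "cutrank G (verts G - X) \<le> card ?C"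
  proof (rule row_bound[OF G cls_finite[OF G]])
    show "\<forall>x\<in>(verts G - X) \<inter> verts G. (\<exists>y\<in>verts G - (verts G - X). adj G x y) \<longrightarrow> (\<exists>C\<in>?C. x \<in> C)"
    proof (intro ballI impI)
      fix x assume x: "x \<in> (verts G - X) \<inter> verts G" and "\<exists>y\<in>verts G - (verts G - X). adj G x y"
      then obtain y where y: "y \<in> X" "adj G x y" by auto
      have "adj G y x" using fg_adj_sym[OF G y(2)] .
      hence "x \<in> bag t" using t(2) x y(1) by blast
      thus "\<exists>C\<in>?C. x \<in> C" using cov x by blast
    qed
    show "\<forall>C\<in>?C. \<forall>u\<in>C \<inter> (verts G - X). \<forall>v\<in>C \<inter> (verts G - X). \<forall>y\<in>verts G - (verts G - X). adj G u y \<longleftrightarrow> adj G v y"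
    proof (intro ballI)
      fix C u v y assume C: "C \<in> ?C" and u: "u \<in> C \<inter> (verts G - X)" and v: "v \<in> C \<inter> (verts G - X)"
        and y: "y \<in> verts G - (verts G - X)"
      have "y \<noteq> u" "y \<noteq> v" using u v y by auto
      hence "adj G y u \<longleftrightarrow> adj G y v" using twin[OF C] u v by blast
      thus "adj G u y \<longleftrightarrow> adj G v y" using fg_adj_sym[OF G, of u y] fg_adj_sym[OF G, of y u] fg_adj_sym[OF G, of v y] fg_adj_sym[OF G, of y v]
        by blast
    qed
  qed
  have "card ?C \<le> w" using w t(1) by simp
  thus ?thesis using c1 c2 by (simp add: le_max_iff_disj)
qed

end

lemma cutrank_emptyV: "verts G = {} \<Longrightarrow> cutrank G X = 0"
proof -
  assume e: "verts G = {}"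
  have "cutrank G X \<le> 0" by (rule cutrank_le) (use e in auto)
  thus ?thesis by simp
qed

lemma rankwidth_le:
  assumes "rank_decomposition G N E f" "\<forall>(s, t)\<in>E. cutrank G (f ` (tree_leaves N E \<inter> tree_side N E s t)) \<le> w"
  shows "rankwidth G \<le> w"
  unfolding rankwidth_def by (rule wellorder_Inf_le1) (use assms in blast)

lemma td_rw:
  assumes G: "finite_graph G" and td: "tree_decomposition G N E bag"
    and w: "\<forall>t\<in>N. card (cls G (bag t)) \<le> w"
  shows "rankwidth G \<le> max (max 1 w) (Inf ({}::nat set))"
proof (cases "verts G = {}")
  case True
  show ?thesis
  proof (cases "\<exists>N E f. rank_decomposition G N E f")
    case True
    then obtain N' E' f where rd: "rank_decomposition G N' E' f" by blast
    have "\<forall>(s, t)\<in>E'. cutrank G (f ` (tree_leaves N' E' \<inter> tree_side N' E' s t)) \<le> 0"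
      using cutrank_emptyV[OF \<open>verts G = {}\<close>] by simp
    hence "rankwidth G \<le> 0" by (rule rankwidth_le[OF rd])
    thus ?thesis by simp
  next
    case False
    hence eq: "{w. \<exists>N E f. rank_decomposition G N E f \<and>
      (\<forall>(s, t)\<in>E. cutrank G (f ` (tree_leaves N E \<inter> tree_side N E s t)) \<le> w)} = {}" by blast
    have "rankwidth G = Inf ({}::nat set)" unfolding rankwidth_def by (simp only: eq)
    thus ?thesis by simp
  qed
next
  case False
  obtain T where T: "lvs T = verts G" "dst T" "\<forall>X\<in>clus T. Qd G N bag X"
    using bt_exists[OF G td False] by blast
  have "\<forall>X\<in>clus T. cutrank G X \<le> max 1 w \<and> cutrank G (verts G - X) \<le> max 1 w"
  proof
    fix X assume X: "X \<in> clus T"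
    have "X \<subseteq> verts G" using clus_sub[OF X] T(1) by simp
    moreover have "Qd G N bag X" using T(3) X by blast
    ultimately show "cutrank G X \<le> max 1 w \<and> cutrank G (verts G - X) \<le> max 1 w"
      by (rule Qd_cut[OF G td w])
  qed
  from rd_of_bt[OF T(2,1) this] obtain N' E' f where "rank_decomposition G N' E' f"
    "\<forall>(s, t)\<in>E'. cutrank G (f ` (tree_leaves N' E' \<inter> tree_side N' E' s t)) \<le> max 1 w"
    by blast
  hence "rankwidth G \<le> max 1 w" by (rule rankwidth_le)
  thus ?thesis by simp
qed


definition cwle :: "'a graph \<Rightarrow> nat \<Rightarrow> bool" where
  "cwle G c \<longleftrightarrow> (\<exists>N E bag. tree_decomposition G N E bag \<and> (\<forall>t\<in>N. card (cls G (bag t)) \<le> c))"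

lemma td_rd:
  assumes G: "finite_graph G" and td: "tree_decomposition G N E bag"
    and w: "\<forall>t\<in>N. card (cls G (bag t)) \<le> w" and ne: "verts G \<noteq> {}"
  shows "\<exists>N E f. rank_decomposition G N E f \<and>
     (\<forall>(s, t)\<in>E. cutrank G (f ` (tree_leaves N E \<inter> tree_side N E s t)) \<le> max 1 w)"
proof -
  obtain T where T: "lvs T = verts G" "dst T" "\<forall>X\<in>clus T. Qd G N bag X"
    using bt_exists[OF G td ne] by blast
  have "\<forall>X\<in>clus T. cutrank G X \<le> max 1 w \<and> cutrank G (verts G - X) \<le> max 1 w"
  proof
    fix X assume X: "X \<in> clus T"
    have "X \<subseteq> verts G" using clus_sub[OF X] T(1) by simp
    moreover have "Qd G N bag X" using T(3) X by blast
    ultimately show "cutrank G X \<le> max 1 w \<and> cutrank G (verts G - X) \<le> max 1 w"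
      by (rule Qd_cut[OF G td w])
  qed
  thus ?thesis by (rule rd_of_bt[OF T(2,1)])
qed

lemma to_alpha:
  assumes G: "finite_graph G" and c: "cwle G c"
  shows "alpha_treewidth G \<le> c"
proof -
  obtain N E bag where td: "tree_decomposition G N E bag" and w: "\<forall>t\<in>N. card (cls G (bag t)) \<le> c"
    using c unfolding cwle_def by blast
  have "\<forall>t\<in>N. alpha (induced G (bag t)) \<le> c"
  proof
    fix t assume t: "t \<in> N"
    have "bag t \<subseteq> verts G" using td t unfolding tree_decomposition_def by blast
    hence a1: "alpha (induced G (bag t)) \<le> card (cls G (bag t))" by (rule alpha_of_cw[OF G])
    have a2: "card (cls G (bag t)) \<le> c" using w t by blast
    show "alpha (induced G (bag t)) \<le> c" using a1 a2 by (rule order_trans)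
  qed
  hence "c \<in> {w. \<exists>N E bag. tree_decomposition G N E bag \<and> (\<forall>t\<in>N. alpha (induced G (bag t)) \<le> w)}"
    using td by blast
  thus ?thesis unfolding alpha_treewidth_def by (rule wellorder_Inf_le1)
qed

lemma to_tw:
  assumes G: "finite_graph G" and c: "cwle G c"
  shows "treewidth (clique_quotient G) \<le> c"
proof -
  obtain N E bag where td: "tree_decomposition G N E bag" and w: "\<forall>t\<in>N. card (cls G (bag t)) \<le> c"
    using c unfolding cwle_def by blast
  have "tree_decomposition (clique_quotient G) N E (\<lambda>t. cls G (bag t))"
    using quot_of_cw[OF G td w] by simp
  hence "c \<in> {w. \<exists>N E bag. tree_decomposition (clique_quotient G) N E bag \<and> (\<forall>t\<in>N. card (bag t) \<le> w)}"
    using w by blast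
  thus ?thesis unfolding treewidth_def by (rule wellorder_Inf_le1)
qed

lemma to_rw:
  assumes G: "finite_graph G" and c: "cwle G c"
  shows "rankwidth G \<le> max (max 1 c) (Inf ({}::nat set))"
proof -
  obtain N E bag where td: "tree_decomposition G N E bag" and w: "\<forall>t\<in>N. card (cls G (bag t)) \<le> c"
    using c unfolding cwle_def by blast
  show ?thesis by (rule td_rw[OF G td w])
qed

lemma cwle_trivial: "finite_graph G \<Longrightarrow> cwle G (card (verts G))"
proof -
  assume G: "finite_graph G"
  have "card (cls G (verts G)) \<le> card (verts G)" using card_cls_le fg_finite[OF G] by blast
  thus ?thesis unfolding cwle_def using trivial_td[OF G] by blast
qed

lemma from_alpha:
  assumes G: "finite_graph G" and om: "omega_tilde G \<le> d"
  shows "cwle G (2 ^ (Suc d + Suc (alpha_treewidth G)))"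
proof -
  let ?S = "{w. \<exists>N E bag. tree_decomposition G N E bag \<and> (\<forall>t\<in>N. alpha (induced G (bag t)) \<le> w)}"
  have "\<forall>t\<in>{0::nat}. alpha (induced G (verts G)) \<le> card (verts G)"
  proof
    show "alpha (induced G (verts G)) \<le> card (verts G)"
    proof (rule alpha_le[OF G])
      fix I assume "independent (induced G (verts G)) I"
      hence "I \<subseteq> verts G" unfolding independent_def verts_induced by auto
      thus "card I \<le> card (verts G)" using fg_finite[OF G] by (rule card_mono[rotated])
    qed
  qed
  hence "card (verts G) \<in> ?S" using trivial_td[OF G] by blast
  hence "Inf ?S \<in> ?S" by (rule wellorder_InfI)
  then obtain N E bag where td: "tree_decomposition G N E bag"
    and a: "\<forall>t\<in>N. alpha (induced G (bag t)) \<le> alpha_treewidth G"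
    unfolding alpha_treewidth_def by blast
  have "\<forall>t\<in>N. card (cls G (bag t)) \<le> 2 ^ (Suc d + Suc (alpha_treewidth G))"
  proof
    fix t assume t: "t \<in> N"
    have "bag t \<subseteq> verts G" using td t unfolding tree_decomposition_def by blast
    from cw_of_alpha[OF G om this] a t
    show "card (cls G (bag t)) \<le> 2 ^ (Suc d + Suc (alpha_treewidth G))" by (meson less_imp_le)
  qed
  thus ?thesis unfolding cwle_def using td by blast
qed

lemma quot_trivial_td: "tree_decomposition (clique_quotient G) {0} {} (\<lambda>_. eq_classes G)"
  unfolding tree_decomposition_def is_tree_def connected_in_def verts_quot adj_quot by auto

lemma from_tw:
  assumes G: "finite_graph G"
  shows "cwle G (treewidth (clique_quotient G))"
proof -
  let ?S = "{w. \<exists>N E bag. tree_decomposition (clique_quotient G) N E bag \<and> (\<forall>t\<in>N. card (bag t) \<le> w)}"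
  have "card (eq_classes G) \<in> ?S" using quot_trivial_td[of G] by blast
  hence "Inf ?S \<in> ?S" by (rule wellorder_InfI)
  then obtain N E bagQ where td: "tree_decomposition (clique_quotient G) N E bagQ"
    and a: "\<forall>t\<in>N. card (bagQ t) \<le> treewidth (clique_quotient G)"
    unfolding treewidth_def by blast
  from cw_of_quot[OF G td a] show ?thesis unfolding cwle_def by blast
qed

lemma from_rw:
  assumes G: "finite_graph G" and om: "omega_tilde G \<le> d" and al: "alpha_star G \<le> d"
  shows "cwle G (1 + 3 * (2 * (2 ^ rankwidth G * 2 ^ (Suc d + Suc d))))"
proof (cases "verts G = {}")
  case True
  have "cls G (verts G) = {}" unfolding cls_def using True by auto
  thus ?thesis unfolding cwle_def using trivial_td[OF G] by (intro exI[of _ "{0}"] exI[of _ "{}"] exI[of _ "\<lambda>_. verts G"]) auto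
next
  case False
  let ?S = "{w. \<exists>N E f. rank_decomposition G N E f \<and>
      (\<forall>(s, t)\<in>E. cutrank G (f ` (tree_leaves N E \<inter> tree_side N E s t)) \<le> w)}"
  have "card (cls G (verts G)) \<le> card (verts G)" using card_cls_le fg_finite[OF G] by blast
  hence "\<forall>t\<in>{0::nat}. card (cls G (verts G)) \<le> card (verts G)" by simp
  from td_rd[OF G trivial_td[OF G] this False]
  have "max 1 (card (verts G)) \<in> ?S" by blast
  hence "Inf ?S \<in> ?S" by (rule wellorder_InfI)
  then obtain N E f where rd: "rank_decomposition G N E f"
    and k: "\<forall>(s, t)\<in>E. cutrank G (f ` (tree_leaves N E \<inter> tree_side N E s t)) \<le> rankwidth G"
    unfolding rankwidth_def by blast
  have M: "card (cls G (nbrs G b)) \<le> 2 ^ (Suc d + Suc d)" for b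
    using nbrs_bound[OF G om al, of b] by simp
  from rd_to_td[OF G rd k M] show ?thesis unfolding cwle_def by blast
qed

theorem theorem8p4:
  fixes d :: nat and \<G> :: "'a graph set"
  assumes "d > 0"
    and "\<forall>G\<in>\<G>. finite_graph G"
    and "hereditary \<G>"
    and "\<forall>G\<in>\<G>. max (alpha_star G) (omega_tilde G) \<le> d"
  shows "\<forall>p \<in> {alpha_treewidth, rankwidth, (\<lambda>G. treewidth (clique_quotient G))}.
         \<forall>q \<in> {alpha_treewidth, rankwidth, (\<lambda>G. treewidth (clique_quotient G))}.
           \<exists>g :: nat \<Rightarrow> nat. \<forall>G\<in>\<G>. q G \<le> g (p G)"
proof -
  have fg: "finite_graph G" if "G \<in> \<G>" for G using assms(2) that by blast
  have om: "omega_tilde G \<le> d" if "G \<in> \<G>" for G using assms(4) that by fastforce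
  have al: "alpha_star G \<le> d" if "G \<in> \<G>" for G using assms(4) that by fastforce
  have from_p: "\<exists>cb. \<forall>G\<in>\<G>. cwle G (cb (p G))"
    if p: "p \<in> {alpha_treewidth, rankwidth, (\<lambda>G. treewidth (clique_quotient G))}" for p :: "'a graph \<Rightarrow> nat"
  proof -
    from p consider "p = alpha_treewidth" | "p = rankwidth" | "p = (\<lambda>G. treewidth (clique_quotient G))" by blast
    thus ?thesis
    proof cases
      case 1
      have "\<forall>G\<in>\<G>. cwle G ((\<lambda>k. 2 ^ (Suc d + Suc k)) (p G))"
      proof
        fix G assume "G \<in> \<G>"
        thus "cwle G ((\<lambda>k. 2 ^ (Suc d + Suc k)) (p G))" using from_alpha[OF fg om] 1 by simp
      qed
      thus ?thesis by (intro exI[of _ "\<lambda>k. 2 ^ (Suc d + Suc k)"]) simp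
    next
      case 2
      have "\<forall>G\<in>\<G>. cwle G ((\<lambda>k. 1 + 3 * (2 * (2 ^ k * 2 ^ (Suc d + Suc d)))) (p G))"
      proof
        fix G assume "G \<in> \<G>"
        thus "cwle G ((\<lambda>k. 1 + 3 * (2 * (2 ^ k * 2 ^ (Suc d + Suc d)))) (p G))"
          using from_rw[OF fg om al] 2 by simp
      qed
      thus ?thesis by (intro exI[of _ "\<lambda>k. 1 + 3 * (2 * (2 ^ k * 2 ^ (Suc d + Suc d)))"]) simp
    next
      case 3
      have "\<forall>G\<in>\<G>. cwle G ((\<lambda>k. k) (p G))"
      proof
        fix G assume "G \<in> \<G>"
        thus "cwle G ((\<lambda>k. k) (p G))" using from_tw[OF fg] 3 by simp
      qed
      thus ?thesis by (intro exI[of _ "\<lambda>k. k"]) simp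
    qed
  qed
  have to_q: "\<exists>qb. \<forall>G\<in>\<G>. \<forall>c. cwle G c \<longrightarrow> q G \<le> qb c"
    if q: "q \<in> {alpha_treewidth, rankwidth, (\<lambda>G. treewidth (clique_quotient G))}" for q :: "'a graph \<Rightarrow> nat"
  proof -
    from q consider "q = alpha_treewidth" | "q = rankwidth" | "q = (\<lambda>G. treewidth (clique_quotient G))" by blast
    thus ?thesis
    proof cases
      case 1
      have "\<forall>G\<in>\<G>. \<forall>c. cwle G c \<longrightarrow> q G \<le> (\<lambda>c. c) c"
      proof (intro ballI allI impI)
        fix G c assume "G \<in> \<G>" "cwle G c"
        thus "q G \<le> (\<lambda>c. c) c" using to_alpha[OF fg] 1 by simp
      qed
      thus ?thesis by (intro exI[of _ "\<lambda>c. c"]) simp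
    next
      case 2
      have "\<forall>G\<in>\<G>. \<forall>c. cwle G c \<longrightarrow> q G \<le> (\<lambda>c. max (max 1 c) (Inf ({}::nat set))) c"
      proof (intro ballI allI impI)
        fix G c assume "G \<in> \<G>" "cwle G c"
        thus "q G \<le> (\<lambda>c. max (max 1 c) (Inf ({}::nat set))) c" using to_rw[OF fg] 2 by simp
      qed
      thus ?thesis by (intro exI[of _ "\<lambda>c. max (max 1 c) (Inf ({}::nat set))"]) simp
    next
      case 3
      have "\<forall>G\<in>\<G>. \<forall>c. cwle G c \<longrightarrow> q G \<le> (\<lambda>c. c) c"
      proof (intro ballI allI impI)
        fix G c assume "G \<in> \<G>" "cwle G c"
        thus "q G \<le> (\<lambda>c. c) c" using to_tw[OF fg] 3 by simp
      qed
      thus ?thesis by (intro exI[of _ "\<lambda>c. c"]) simp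
    qed
  qed
  show ?thesis
  proof (intro ballI)
    fix p q :: "'a graph \<Rightarrow> nat"
    assume p: "p \<in> {alpha_treewidth, rankwidth, (\<lambda>G. treewidth (clique_quotient G))}"
      and q: "q \<in> {alpha_treewidth, rankwidth, (\<lambda>G. treewidth (clique_quotient G))}"
    obtain cb where cb: "\<forall>G\<in>\<G>. cwle G (cb (p G))" using from_p[OF p] by blast
    obtain qb where qb: "\<forall>G\<in>\<G>. \<forall>c. cwle G c \<longrightarrow> q G \<le> qb c" using to_q[OF q] by blast
    have "\<forall>G\<in>\<G>. q G \<le> (qb \<circ> cb) (p G)" using cb qb by simp
    thus "\<exists>g :: nat \<Rightarrow> nat. \<forall>G\<in>\<G>. q G \<le> g (p G)" by blast
  qed
qed


end
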